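(* Assume $(H_S(BS))$. Let $(N^S_t(i))_{t\ge0,i\in\mathbb{Z}}$ be i.i.d. $SR(\mu_S)$-processes and $0\le t_0<t_1<t_0+1$. For $t>0,i\in\mathbb{Z}$ put $\zeta_{t_0,t}(i)=\min(N^S_{T_S(t_0+t)}(i)-N^S_{T_St_0}(i),1)$ and $\zeta_{t_1,t}(i)=\min(N^S_{T_S(t_1+t)}(i)-N^S_{T_St_1}(i),1)$, and $\Theta_{t_0,t_1}=\inf\{t>0:\ \forall i\in C(\zeta_{t_0,t_1-t_0},0),\ \zeta_{t_1,t}(i)=1\}$. Then $\Theta_{t_0,t_1}\in[0,1]$ and its law is $\theta_{t_1-t_0}$.
   Context: $(H_S(BS))$: $\mu_S$ is a probability measure on $(0,\infty)$ with bounded support and mean $m_S$; $T_S=\max\operatorname{supp}\mu_S$; $\nu_S(dt)=m_S^{-1}\mu_S((t,\infty))dt$, whose support is $[0,T_S]$. A $SR(\mu)$-process: $N_t=\#\{k\ge1:T_k\le t\}$ with $T_1\sim\nu_\mu(dt)=m_\mu^{-1}\mu((t,\infty))dt$, $T_{k+1}=T_k+X_k$, $(X_k)$ i.i.d. with law $\mu$ independent of $T_1$. For $\eta\in\{0,1\}^{\mathbb{Z}}$, $C(\eta,i)$ is $\emptyset$ if $\eta(i)=0$ and otherwise the maximal set of consecutive integers containing $i$ on which $\eta\equiv1$. For $t,s\ge0$, $g_S(t,s)=\Pr[N^S_{T_St}>0,\ N^S_{T_S(t+s)}>N^S_{T_St}]$ for a $SR(\mu_S)$-process $N^S$. For $u\in(0,1)$,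 $\theta_u$ is the probability measure on $[0,1]$ with $\theta_u([0,h])=\nu_S((T_Su,T_S))+\big(\nu_S((T_Su,T_S))/(1-g_S(u,h))\big)^2g_S(u,h)$ for $h\in[0,1]$. *)

theory Defs
  imports "HOL-Probability.Probability"
begin

definition SR_mean :: "real measure \<Rightarrow> real" where
  "SR_mean \<mu> = (\<integral>x. x \<partial>\<mu>)"

definition SR_supp :: "real measure \<Rightarrow> real set" where
  "SR_supp \<mu> = {x. \<forall>e>0. 0 < emeasure \<mu> {x - e <..< x + e}}"

definition SR_T :: "real measure \<Rightarrow> real" where
  "SR_T \<mu> = Sup (SR_supp \<mu>)"

text \<open>Stationary first-arrival law nu(dt) = m^{-1} mu((t,oo)) dt on (0,oo).\<close>
definition SR_nu :: "real measure \<Rightarrow> real measure" where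
  "SR_nu \<mu> = density lborel
     (\<lambda>t. ennreal (indicator {0<..} t * measure \<mu> {t<..} / SR_mean \<mu>))"

text \<open>Counting process of a renewal sequence: y None = T_1, y (Some k) = X_{k+1};
  the arrival times are T_{k+1} = y None + sum_{j<k} y (Some j).\<close>
definition SR_count :: "(nat option \<Rightarrow> real) \<Rightarrow> real \<Rightarrow> nat" where
  "SR_count y t = card {k::nat. y None + (\<Sum>j<k. y (Some j)) \<le> t}"

definition SR_space :: "real measure \<Rightarrow> (nat option \<Rightarrow> real) measure" where
  "SR_space \<mu> = (\<Pi>\<^sub>M j\<in>UNIV. (case j of None \<Rightarrow> SR_nu \<mu> | Some _ \<Rightarrow> \<mu>))"

definition SR_g :: "real measure \<Rightarrow> real \<Rightarrow> real \<Rightarrow> real" where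
  "SR_g \<mu> t s = measure (SR_space \<mu>)
     {y \<in> space (SR_space \<mu>). 0 < SR_count y (SR_T \<mu> * t)
                              \<and> SR_count y (SR_T \<mu> * t) < SR_count y (SR_T \<mu> * (t + s))}"

definition theta_cdf :: "real measure \<Rightarrow> real \<Rightarrow> real \<Rightarrow> real" where
  "theta_cdf \<mu> u h =
     (let a = measure (SR_nu \<mu>) {SR_T \<mu> * u <..< SR_T \<mu>}; g = SR_g \<mu> u h
      in a + (a / (1 - g))\<^sup>2 * g)"

definition consec_comp :: "(int \<Rightarrow> nat) \<Rightarrow> int \<Rightarrow> int set" where
  "consec_comp \<eta> i = (if \<eta> i = 0 then {}
     else {j. \<forall>k. min i j \<le> k \<and> k \<le> max i j \<longrightarrow> \<eta> k = 1})"

definition SR_N :: "real measure \<Rightarrow> (int \<Rightarrow> nat option \<Rightarrow> 'a \<Rightarrow> real) \<Rightarrow> int \<Rightarrow> real \<Rightarrow> 'a \<Rightarrow> nat" where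
  "SR_N \<mu> Y i t \<omega> = SR_count (\<lambda>j. Y i j \<omega>) (SR_T \<mu> * t)"

definition SR_zeta :: "real measure \<Rightarrow> (int \<Rightarrow> nat option \<Rightarrow> 'a \<Rightarrow> real) \<Rightarrow> real \<Rightarrow> real \<Rightarrow> int \<Rightarrow> 'a \<Rightarrow> nat" where
  "SR_zeta \<mu> Y s t i \<omega> = min (SR_N \<mu> Y i (s + t) \<omega> - SR_N \<mu> Y i s \<omega>) 1"

definition SR_Theta :: "real measure \<Rightarrow> (int \<Rightarrow> nat option \<Rightarrow> 'a \<Rightarrow> real) \<Rightarrow> real \<Rightarrow> real \<Rightarrow> 'a \<Rightarrow> real" where
  "SR_Theta \<mu> Y t0 t1 \<omega> = Inf {t::real. 0 < t \<and>
     (\<forall>i \<in> consec_comp (\<lambda>i. SR_zeta \<mu> Y t0 (t1 - t0) i \<omega>) 0. SR_zeta \<mu> Y t1 t i \<omega> = 1)}"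

end

theory Submission
  imports Defs
begin


locale mu_ass =
  fixes \<mu> :: "real measure"
  assumes mu_prob: "prob_space \<mu>" and mu_sets: "sets \<mu> = sets borel"
    and mu_pos: "emeasure \<mu> {..0} = 0" and mu_bdd: "\<exists>B. emeasure \<mu> {B<..} = 0"
begin

sublocale MU: prob_space \<mu> by (rule mu_prob)

lemma mu_meas[simp]: "A \<in> sets borel \<Longrightarrow> A \<in> sets \<mu>"
  using mu_sets by simp

lemma compact_null:
  assumes K: "compact K" and dis: "K \<inter> SR_supp \<mu> = {}"
  shows "emeasure \<mu> K = 0"
proof -
  have "\<forall>x\<in>K. \<exists>e>0. emeasure \<mu> {x - e <..< x + e} = 0"
  proof
    fix x assume "x \<in> K"
    then have "x \<notin> SR_supp \<mu>" using dis by auto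
    then show "\<exists>e>0. emeasure \<mu> {x - e <..< x + e} = 0"
      unfolding SR_supp_def by (auto simp: not_less)
  qed
  then obtain e where e: "\<And>x. x\<in>K \<Longrightarrow> e x > 0 \<and> emeasure \<mu> {x - e x <..< x + e x} = 0"
    by metis
  have cov: "K \<subseteq> (\<Union>x\<in>K. {x - e x <..< x + e x})" using e by force
  obtain C' where C': "C' \<subseteq> K" "finite C'" "K \<subseteq> (\<Union>x\<in>C'. {x - e x <..< x + e x})"
    using compactE_image[OF K _ cov] by (metis open_greaterThanLessThan)
  have "emeasure \<mu> K \<le> emeasure \<mu> (\<Union>x\<in>C'. {x - e x <..< x + e x})"
    by (intro emeasure_mono C') (auto intro!: sets.finite_UN C')
  also have "\<dots> \<le> (\<Sum>x\<in>C'. emeasure \<mu> {x - e x <..< x + e x})"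
    by (intro emeasure_subadditive_finite C') auto
  also have "\<dots> = 0" using C' e by (auto intro!: sum.neutral)
  finally show ?thesis by simp
qed

lemma supp_le: "emeasure \<mu> {B<..} = 0 \<Longrightarrow> x \<in> SR_supp \<mu> \<Longrightarrow> x \<le> B"
proof (rule ccontr)
  assume B: "emeasure \<mu> {B<..} = 0" and x: "x \<in> SR_supp \<mu>" and "\<not> x \<le> B"
  then have "0 < x - B" by simp
  then have "0 < emeasure \<mu> {x - (x - B) <..< x + (x - B)}"
    using x unfolding SR_supp_def by blast
  also have "\<dots> \<le> emeasure \<mu> {B<..}" by (intro emeasure_mono) auto
  finally show False using B by simp
qed

lemma space_mu: "space \<mu> = UNIV" using sets_eq_imp_space_eq[OF mu_sets] by simp

lemma total_split: "emeasure \<mu> UNIV \<le> emeasure \<mu> {..0} + emeasure \<mu> A + emeasure \<mu> B"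
  if "UNIV \<subseteq> {..0} \<union> A \<union> B" "A \<in> sets borel" "B \<in> sets borel" for A B
proof -
  have "emeasure \<mu> UNIV \<le> emeasure \<mu> ({..0} \<union> A \<union> B)"
    using that by (intro emeasure_mono) auto
  also have "\<dots> \<le> emeasure \<mu> ({..0} \<union> A) + emeasure \<mu> B"
    using that by (intro emeasure_subadditive) auto
  also have "\<dots> \<le> emeasure \<mu> {..0} + emeasure \<mu> A + emeasure \<mu> B"
    using that by (intro add_right_mono emeasure_subadditive) auto
  finally show ?thesis .
qed

lemma supp_ne: "SR_supp \<mu> \<noteq> {}"
proof
  assume e: "SR_supp \<mu> = {}"
  obtain B where B: "emeasure \<mu> {B<..} = 0" using mu_bdd by auto
  have "emeasure \<mu> {0..B} = 0" using e by (intro compact_null) auto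
  moreover have "emeasure \<mu> UNIV \<le> emeasure \<mu> {..0} + emeasure \<mu> {0..B} + emeasure \<mu> {B<..}"
    by (rule total_split) auto
  ultimately have "emeasure \<mu> UNIV \<le> 0"
    using mu_pos B by simp
  then show False using MU.emeasure_space_1 space_mu by simp
qed

lemma supp_bdd: "bdd_above (SR_supp \<mu>)"
  using mu_bdd supp_le by (auto simp: bdd_above_def)

abbreviation "TT \<equiv> SR_T \<mu>"

lemma T_null: "emeasure \<mu> {TT<..} = 0"
proof -
  obtain B where B: "emeasure \<mu> {B<..} = 0" using mu_bdd by auto
  have sub: "{TT<..} \<subseteq> (\<Union>n. {TT + 1/Suc n..B}) \<union> {B<..}"
  proof
    fix x assume "x \<in> {TT<..}"
    then have x: "x > TT" by simp
    show "x \<in> (\<Union>n. {TT + 1/Suc n..B}) \<union> {B<..}"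
    proof (cases "x \<le> B")
      case True
      obtain n where "1 / real (Suc n) < x - TT" using reals_Archimedean[of "x - TT"] x
        by (auto simp: inverse_eq_divide)
      then have "TT + 1 / real (Suc n) \<le> x" by linarith
      then have "x \<in> {TT + 1/Suc n..B}" using True by simp
      then show ?thesis by blast
    qed auto
  qed
  have n: "{TT + 1/Suc n..B} \<in> null_sets \<mu>" for n
  proof -
    have "{TT + 1/Suc n..B} \<inter> SR_supp \<mu> = {}"
    proof (safe)
      fix x assume "x \<in> {TT + 1/Suc n..B}" "x \<in> SR_supp \<mu>"
      then have "x \<le> TT" unfolding SR_T_def using supp_bdd by (intro cSup_upper) auto
      moreover have "0 < 1 / (1 + real n)" by (simp add: add_pos_nonneg)
      moreover have "TT + 1 / (1 + real n) \<le> x" using \<open>x \<in> {TT + 1/Suc n..B}\<close> by simp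
      ultimately show "x \<in> {}" by linarith
    qed
    then show ?thesis using compact_null[of "{TT + 1/Suc n..B}"] by (auto simp: null_sets_def)
  qed
  have "(\<Union>n. {TT + 1/Suc n..B}) \<union> {B<..} \<in> null_sets \<mu>"
    using n B by (intro null_sets.Un null_sets_UN') (auto simp: null_sets_def)
  then show ?thesis using sub by (meson null_sets_subset measurable_sets_borel mu_meas
        borel_open open_greaterThan null_setsD1)
qed

lemma T_pos: "0 < TT"
proof (rule ccontr)
  assume "\<not> 0 < TT"
  then have "emeasure \<mu> {0<..} \<le> emeasure \<mu> {TT<..}" by (intro emeasure_mono) auto
  then have "emeasure \<mu> {0<..} = 0" using T_null by simp
  moreover have "emeasure \<mu> UNIV \<le> emeasure \<mu> {..0} + emeasure \<mu> {0<..} + emeasure \<mu> {}"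
    by (rule total_split) auto
  ultimately have "emeasure \<mu> UNIV \<le> 0"
    using mu_pos by simp
  then show False using MU.emeasure_space_1 space_mu by simp
qed

lemma below_T: "t < TT \<Longrightarrow> 0 < emeasure \<mu> {t<..}"
proof -
  assume "t < TT"
  then obtain x where x: "x \<in> SR_supp \<mu>" "t < x"
    unfolding SR_T_def using less_cSup_iff[OF supp_ne supp_bdd] by auto
  then have "0 < x - t" by simp
  then have "0 < emeasure \<mu> {x - (x - t) <..< x + (x - t)}" using x unfolding SR_supp_def by blast
  also have "\<dots> \<le> emeasure \<mu> {t<..}" by (intro emeasure_mono) auto
  finally show ?thesis .
qed

lemma above_T: "TT \<le> t \<Longrightarrow> emeasure \<mu> {t<..} = 0"
proof -
  assume "TT \<le> t"
  then have "emeasure \<mu> {t<..} \<le> emeasure \<mu> {TT<..}" by (intro emeasure_mono) auto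
  then show ?thesis using T_null by simp
qed

lemma AE_mu: "AE x in \<mu>. 0 < x \<and> x \<le> TT"
proof -
  have "{x \<in> space \<mu>. \<not> (0 < x \<and> x \<le> TT)} \<subseteq> {..0} \<union> {TT<..}" by auto
  moreover have "{..0} \<union> {TT<..} \<in> null_sets \<mu>"
    using mu_pos T_null by (intro null_sets.Un) (auto intro!: null_setsI)
  ultimately show ?thesis by (rule AE_I'[rotated])
qed

end


context prob_space begin
lemma indep_pair_nn:
  assumes ind: "indep_var borel A borel B" and h[measurable]: "h \<in> borel_measurable (borel \<Otimes>\<^sub>M borel)"
  shows "(\<integral>\<^sup>+\<omega>. h (A \<omega>, B \<omega>) \<partial>M) = (\<integral>\<^sup>+a. \<integral>\<^sup>+b. h (a, b) \<partial>(distr M borel B) \<partial>(distr M borel A))"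
    and "(\<integral>\<^sup>+\<omega>. h (A \<omega>, B \<omega>) \<partial>M) = (\<integral>\<^sup>+b. \<integral>\<^sup>+a. h (a, b) \<partial>(distr M borel A) \<partial>(distr M borel B))"
proof -
  have rvA[measurable]: "random_variable borel A" and rvB[measurable]: "random_variable borel B"
   and eq: "distr M borel A \<Otimes>\<^sub>M distr M borel B = distr M (borel \<Otimes>\<^sub>M borel) (\<lambda>x. (A x, B x))"
    using ind unfolding indep_var_distribution_eq by auto
  interpret DA: prob_space "distr M borel A" by (intro prob_space_distr rvA)
  interpret DB: prob_space "distr M borel B" by (intro prob_space_distr rvB)
  interpret DAB: pair_sigma_finite "distr M borel A" "distr M borel B" ..
  have seq: "sets (distr M borel A \<Otimes>\<^sub>M distr M borel B) = sets (borel \<Otimes>\<^sub>M borel)"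
    by (intro sets_pair_measure_cong) simp_all
  have hm: "h \<in> borel_measurable (distr M borel A \<Otimes>\<^sub>M distr M borel B)"
    using measurable_cong_sets[OF seq refl] h by simp
  have 1: "(\<integral>\<^sup>+\<omega>. h (A \<omega>, B \<omega>) \<partial>M) = integral\<^sup>N (distr M (borel \<Otimes>\<^sub>M borel) (\<lambda>x. (A x, B x))) h"
    by (subst nn_integral_distr) auto
  then show "(\<integral>\<^sup>+\<omega>. h (A \<omega>, B \<omega>) \<partial>M) = (\<integral>\<^sup>+a. \<integral>\<^sup>+b. h (a, b) \<partial>(distr M borel B) \<partial>(distr M borel A))"
    using eq DB.nn_integral_fst[OF hm] by simp
  have hm': "case_prod (\<lambda>a b. h (a, b)) \<in> borel_measurable (distr M borel A \<Otimes>\<^sub>M distr M borel B)"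
    using hm by simp
  show "(\<integral>\<^sup>+\<omega>. h (A \<omega>, B \<omega>) \<partial>M) = (\<integral>\<^sup>+b. \<integral>\<^sup>+a. h (a, b) \<partial>(distr M borel A) \<partial>(distr M borel B))"
    using 1 eq DB.nn_integral_fst[OF hm] DAB.Fubini'[OF hm'] by simp
qed
end

context mu_ass begin

abbreviation "nu \<equiv> SR_nu \<mu>"
abbreviation "mm \<equiv> SR_mean \<mu>"

definition Fb :: "real \<Rightarrow> real" where "Fb t = measure \<mu> {t<..}"

lemma Fb_meas[measurable]: "Fb \<in> borel_measurable borel"
proof -
  have "mono (\<lambda>t. measure \<mu> {..t})"
    by (auto simp: mono_def intro!: MU.finite_measure_mono)
  then have [measurable]: "(\<lambda>t. measure \<mu> {..t}) \<in> borel_measurable borel" by (rule borel_measurable_mono)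
  have "Fb t = 1 - measure \<mu> {..t}" for t
  proof -
    have "measure \<mu> {t<..} = measure \<mu> (space \<mu> - {..t})" using space_mu by (simp add: Compl_eq_Diff_UNIV[symmetric] not_le)
    also have "\<dots> = 1 - measure \<mu> {..t}" by (simp add: MU.prob_compl)
    finally show ?thesis unfolding Fb_def .
  qed
  then have "Fb = (\<lambda>t. 1 - measure \<mu> {..t})" by (simp add: fun_eq_iff)
  then show ?thesis by simp
qed

lemma mu_measurable: "f \<in> borel_measurable borel \<Longrightarrow> f \<in> borel_measurable \<mu>"
  by (subst measurable_cong_sets[OF mu_sets refl]) simp

lemma Fb_emeasure: "emeasure \<mu> {t<..} = ennreal (Fb t)"
  unfolding Fb_def by (simp add: MU.emeasure_eq_measure)

lemma Fb_nonneg: "0 \<le> Fb t" unfolding Fb_def by simp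

lemma Fb_zero: "TT \<le> t \<Longrightarrow> Fb t = 0"
proof -
  assume "TT \<le> t"
  then have "ennreal (Fb t) = 0" using above_T Fb_emeasure by simp
  then show ?thesis using Fb_nonneg[of t] by simp
qed

lemma Fb_pos: "t < TT \<Longrightarrow> 0 < Fb t"
proof -
  assume "t < TT"
  then have "0 < ennreal (Fb t)" using below_T Fb_emeasure by simp
  then show ?thesis by simp
qed

lemma Fb_mono: "s \<le> t \<Longrightarrow> Fb t \<le> Fb s"
  unfolding Fb_def by (intro MU.finite_measure_mono) auto

lemma mm_pos: "0 < mm"
proof -
  have int: "integrable \<mu> (\<lambda>x. x)"
    by (rule MU.integrable_const_bound[where B=TT]) (use AE_mu in \<open>auto elim: AE_mp intro: mu_measurable\<close>)
  have "ennreal mm = \<integral>\<^sup>+x. ennreal x \<partial>\<mu>"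
    unfolding SR_mean_def using AE_mu int
    by (intro nn_integral_eq_integral[symmetric]) (auto elim: AE_mp)
  also have "\<dots> \<ge> \<integral>\<^sup>+x. ennreal (TT/2) * indicator {TT/2<..} x \<partial>\<mu>"
    by (intro nn_integral_mono) (auto split: split_indicator intro!: ennreal_leI)
  also have "(\<integral>\<^sup>+x. ennreal (TT/2) * indicator {TT/2<..} x \<partial>\<mu>) = ennreal (TT/2) * ennreal (Fb (TT/2))"
    by (simp add: nn_integral_cmult_indicator Fb_emeasure)
  finally have "ennreal (TT/2) * ennreal (Fb (TT/2)) \<le> ennreal mm" .
  moreover have "0 < TT/2 * Fb (TT/2)" using T_pos Fb_pos[of "TT/2"] by simp
  ultimately show ?thesis
    by (metis ennreal_le_iff ennreal_mult' ennreal_neg less_le_trans linorder_not_le order_refl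
        Fb_nonneg mult_nonneg_nonneg T_pos less_imp_le half_gt_zero)
qed

definition dens :: "real \<Rightarrow> ennreal" where
  "dens t = ennreal (indicator {0<..} t * measure \<mu> {t<..} / mm)"

lemma dens_alt: "dens t = ennreal (1/mm) * indicator {0<..} t * ennreal (Fb t)"
  unfolding dens_def Fb_def using mm_pos
  by (auto simp: indicator_def ennreal_mult'' divide_inverse mult.commute)

lemma dens_meas[measurable]: "dens \<in> borel_measurable borel"
  unfolding dens_alt by measurable

lemma nu_dens: "nu = density lborel dens"
  unfolding SR_nu_def dens_def ..

lemma sets_nu[simp, measurable_cong]: "sets nu = sets borel"
  unfolding nu_dens by simp

lemma emeasure_nu: "A \<in> sets borel \<Longrightarrow> emeasure nu A = (\<integral>\<^sup>+t. dens t * indicator A t \<partial>lborel)"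
  unfolding nu_dens by (intro emeasure_density) auto

lemma nn_integral_nu: "f \<in> borel_measurable borel \<Longrightarrow> (\<integral>\<^sup>+t. f t \<partial>nu) = (\<integral>\<^sup>+t. dens t * f t \<partial>lborel)"
  unfolding nu_dens by (intro nn_integral_density) auto

lemma nu_tail: "emeasure nu {TT..} = 0"
proof -
  have "(\<integral>\<^sup>+t. dens t * indicator {TT..} t \<partial>lborel) = (\<integral>\<^sup>+t. 0 \<partial>(lborel::real measure))"
    by (intro nn_integral_cong) (auto simp: dens_alt Fb_zero split: split_indicator)
  then show ?thesis by (simp add: emeasure_nu)
qed

lemma nu_nonpos: "emeasure nu {..0} = 0"
proof -
  have "(\<integral>\<^sup>+t. dens t * indicator {..0} t \<partial>lborel) = (\<integral>\<^sup>+t. 0 \<partial>(lborel::real measure))"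
    by (intro nn_integral_cong) (auto simp: dens_alt split: split_indicator)
  then show ?thesis by (simp add: emeasure_nu)
qed

lemma nu_gap_pos:
  assumes c: "0 \<le> c" "c < TT"
  shows "0 < emeasure nu {c<..<TT}"
proof -
  let ?d = "(c + TT) / 2"
  have "ennreal (1/mm) * ennreal (Fb ?d) * ennreal ((TT - c)/2)
        = (\<integral>\<^sup>+t. ennreal (1/mm) * ennreal (Fb ?d) * indicator {c<..?d} t \<partial>lborel)"
    using c by (simp add: nn_integral_cmult_indicator)
  also have "\<dots> \<le> (\<integral>\<^sup>+t. dens t * indicator {c<..<TT} t \<partial>lborel)"
  proof (intro nn_integral_mono)
    fix t
    show "ennreal (1/mm) * ennreal (Fb ?d) * indicator {c<..?d} t \<le> dens t * indicator {c<..<TT} t"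
    proof (cases "t \<in> {c<..?d}")
      case True
      then have "Fb ?d \<le> Fb t" by (intro Fb_mono) auto
      then show ?thesis using True c by (auto simp: dens_alt intro!: mult_left_mono ennreal_leI)
    qed simp
  qed
  also have "\<dots> = emeasure nu {c<..<TT}" by (simp add: emeasure_nu)
  finally have le: "ennreal (1/mm) * ennreal (Fb ?d) * ennreal ((TT - c)/2) \<le> emeasure nu {c<..<TT}" .
  have "0 < ennreal (1/mm) * ennreal (Fb ?d) * ennreal ((TT - c)/2)"
    using mm_pos Fb_pos[of ?d] c by (simp add: ennreal_zero_less_mult_iff)
  then show ?thesis using le by order
qed

end


definition yS :: "(nat option \<Rightarrow> real) \<Rightarrow> nat \<Rightarrow> real" where
  "yS y k = (\<Sum>j<k. y (Some j))"
definition yarr :: "(nat option \<Rightarrow> real) \<Rightarrow> nat \<Rightarrow> real" where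
  "yarr y k = y None + yS y k"
definition yren :: "(nat option \<Rightarrow> real) \<Rightarrow> real \<Rightarrow> real \<Rightarrow> bool" where
  "yren y a b \<longleftrightarrow> (\<exists>k. a < yarr y k \<and> yarr y k \<le> b)"
definition ygood :: "real \<Rightarrow> (nat option \<Rightarrow> real) \<Rightarrow> bool" where
  "ygood B y \<longleftrightarrow> 0 < y None \<and> (\<forall>k. 0 < y (Some k) \<and> y (Some k) \<le> B) \<and> (\<forall>K. \<exists>n. K < yS y n)"

lemma yS_Suc[simp]: "yS y (Suc k) = yS y k + y (Some k)" by (simp add: yS_def)
lemma yS_0[simp]: "yS y 0 = 0" by (simp add: yS_def)
lemma yarr_Suc: "yarr y (Suc k) = yarr y k + y (Some k)" by (simp add: yarr_def)

lemma yS_mono: "ygood B y \<Longrightarrow> k \<le> k' \<Longrightarrow> yS y k \<le> yS y k'"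
  unfolding yS_def ygood_def by (intro sum_mono2) (auto intro: less_imp_le)

lemma yS_smono: "ygood B y \<Longrightarrow> k < k' \<Longrightarrow> yS y k < yS y k'"
proof -
  assume g: "ygood B y" and "k < k'"
  then have "Suc k \<le> k'" by simp
  then have "yS y (Suc k) \<le> yS y k'" using yS_mono[OF g] by blast
  moreover have "yS y k < yS y (Suc k)" using g by (simp add: ygood_def)
  ultimately show ?thesis by simp
qed

lemma yarr_smono: "ygood B y \<Longrightarrow> k < k' \<Longrightarrow> yarr y k < yarr y k'"
  using yS_smono by (simp add: yarr_def)
lemma yarr_mono: "ygood B y \<Longrightarrow> k \<le> k' \<Longrightarrow> yarr y k \<le> yarr y k'"
  using yS_mono by (simp add: yarr_def)
lemma yarr_ge: "ygood B y \<Longrightarrow> y None \<le> yarr y k"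
  using yS_mono[of B y 0 k] by (simp add: yarr_def)
lemma yarr_pos: "ygood B y \<Longrightarrow> 0 < yarr y k"
  using yarr_ge[of B y k] by (simp add: ygood_def)
lemma yarr_unbdd: "ygood B y \<Longrightarrow> \<exists>n. K < yarr y n"
proof -
  assume g: "ygood B y"
  then obtain n where "K - y None < yS y n" by (auto simp: ygood_def)
  then have "K < yarr y n" by (simp add: yarr_def)
  then show ?thesis by blast
qed

lemma measurable_yS[measurable (raw)]:
  assumes [measurable]: "\<And>j. (\<lambda>\<omega>. V \<omega> j) \<in> borel_measurable N"
  shows "(\<lambda>\<omega>. yS (V \<omega>) k) \<in> borel_measurable N"
  unfolding yS_def by measurable

lemma measurable_yarr[measurable (raw)]:
  assumes [measurable]: "\<And>j. (\<lambda>\<omega>. V \<omega> j) \<in> borel_measurable N"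
  shows "(\<lambda>\<omega>. yarr (V \<omega>) k) \<in> borel_measurable N"
  unfolding yarr_def by measurable

lemma measurable_yren[measurable (raw)]:
  assumes [measurable]: "\<And>j. (\<lambda>\<omega>. V \<omega> j) \<in> borel_measurable N"
  shows "Measurable.pred N (\<lambda>\<omega>. yren (V \<omega>) a b)"
  unfolding yren_def by measurable

lemma measurable_ygood[measurable (raw)]:
  assumes [measurable]: "\<And>j. (\<lambda>\<omega>. V \<omega> j) \<in> borel_measurable N"
  shows "Measurable.pred N (\<lambda>\<omega>. ygood B (V \<omega>))"
proof -
  have "(\<lambda>\<omega>. ygood B (V \<omega>)) = (\<lambda>\<omega>. 0 < V \<omega> None \<and> (\<forall>k. 0 < V \<omega> (Some k) \<and> V \<omega> (Some k) \<le> B)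
     \<and> (\<forall>K::nat. \<exists>n. real K < yS (V \<omega>) n))"
  proof (intro ext iffI)
    fix \<omega> assume "0 < V \<omega> None \<and> (\<forall>k. 0 < V \<omega> (Some k) \<and> V \<omega> (Some k) \<le> B) \<and> (\<forall>K::nat. \<exists>n. real K < yS (V \<omega>) n)"
    moreover have "\<exists>n. K < yS (V \<omega>) n" if H: "\<forall>K::nat. \<exists>n. real K < yS (V \<omega>) n" for K
    proof -
      obtain K' :: nat where "K < real K'" using reals_Archimedean2 by blast
      obtain n where "real K' < yS (V \<omega>) n" using H by blast
      then show ?thesis using \<open>K < real K'\<close> by (intro exI[of _ n]) linarith
    qed
    ultimately show "ygood B (V \<omega>)" unfolding ygood_def by blast
  qed (auto simp: ygood_def)
  then show ?thesis by simp
qed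

lemma gap_unique:
  assumes g: "ygood B y" and w: "0 < w" "\<forall>n. yS y n \<noteq> w"
  shows "\<exists>!k. yS y k < w \<and> w < yS y (Suc k)"
proof -
  obtain n where n: "w < yS y n" using g by (auto simp: ygood_def)
  define n0 where "n0 = (LEAST n. w < yS y n)"
  have n0: "w < yS y n0" unfolding n0_def using n by (rule LeastI)
  have "n0 \<noteq> 0" using n0 w(1) by (cases n0) simp_all
  then obtain k0 where k0: "n0 = Suc k0" by (cases n0) auto
  have "k0 < n0" using k0 by simp
  then have "\<not> w < yS y k0" unfolding n0_def by (rule not_less_Least)
  moreover have "yS y k0 \<noteq> w" using w(2) by blast
  ultimately have "yS y k0 < w" by linarith
  then have ex: "yS y k0 < w \<and> w < yS y (Suc k0)" using n0 k0 by simp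
  show ?thesis
  proof (rule ex1I[of _ k0])
    show "yS y k0 < w \<and> w < yS y (Suc k0)" by (rule ex)
    fix k assume k: "yS y k < w \<and> w < yS y (Suc k)"
    show "k = k0"
    proof (rule ccontr)
      assume "k \<noteq> k0"
      then consider "k < k0" | "k0 < k" by linarith
      then show False
      proof cases
        case 1
        then have "Suc k \<le> k0" by simp
        then have "yS y (Suc k) \<le> yS y k0" using yS_mono[OF g] by blast
        then show False using k ex by simp
      next
        case 2
        then have "Suc k0 \<le> k" by simp
        then have "yS y (Suc k0) \<le> yS y k" using yS_mono[OF g] by blast
        then show False using k ex by simp
      qed
    qed
  qed
qed

lemma gap_sum:
  assumes g: "ygood B y" and w: "\<forall>n. yS y n \<noteq> w"
  shows "(\<Sum>k. indicator {yS y k<..} w * indicator {w - yS y k<..} (y (Some k)) :: ennreal) = indicator {0<..} w"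
proof (cases "0 < w")
  case True
  then obtain k0 where k0: "yS y k0 < w \<and> w < yS y (Suc k0)"
    and u: "\<And>k. yS y k < w \<and> w < yS y (Suc k) \<Longrightarrow> k = k0"
    using gap_unique[OF g True w] by metis
  have "(\<lambda>k. indicator {yS y k<..} w * indicator {w - yS y k<..} (y (Some k)) :: ennreal)
     = (\<lambda>k. if k = k0 then 1 else 0)"
  proof
    fix k
    have "(yS y k < w \<and> w - yS y k < y (Some k)) \<longleftrightarrow> k = k0"
    proof
      assume H: "yS y k < w \<and> w - yS y k < y (Some k)"
      then have "yS y k < w \<and> w < yS y (Suc k)" by simp
      then show "k = k0" by (rule u)
    next
      assume "k = k0"
      then show "yS y k < w \<and> w - yS y k < y (Some k)" using k0 by simp
    qed
    then show "indicator {yS y k<..} w * indicator {w - yS y k<..} (y (Some k)) = (if k = k0 then 1 else (0::ennreal))"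
      by (auto split: split_indicator)
  qed
  moreover have "(\<Sum>k. (if k = k0 then 1 else 0::ennreal)) = 1"
    using sums_single[of k0 "\<lambda>_. 1::ennreal"] by (simp add: sums_iff)
  ultimately show ?thesis using True by simp
next
  case False
  have nn: "yS y k \<ge> 0" for k using yS_mono[OF g, of 0 k] by simp
  have "(\<lambda>k. indicator {yS y k<..} w * indicator {w - yS y k<..} (y (Some k)) :: ennreal) = (\<lambda>k. 0)"
  proof
    fix k show "indicator {yS y k<..} w * indicator {w - yS y k<..} (y (Some k)) = (0::ennreal)"
      using False nn[of k] by (auto split: split_indicator)
  qed
  then show ?thesis using False by simp
qed

lemma unbdd_sum:
  fixes x :: "nat \<Rightarrow> real"
  assumes nn: "\<And>j. 0 \<le> x j" and inf: "\<And>N. \<exists>j\<ge>N. \<delta> < x j" and d: "0 < \<delta>"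
  shows "\<exists>n. K < (\<Sum>j<n. x j)"
proof -
  have mono: "(\<Sum>j<n. x j) \<le> (\<Sum>j<n'. x j)" if "n \<le> n'" for n n'
    using that nn by (intro sum_mono2) auto
  have "\<exists>n. real c * \<delta> \<le> (\<Sum>j<n. x j)" for c
  proof (induction c)
    case 0 then show ?case by (auto intro!: exI[of _ 0])
  next
    case (Suc c)
    then obtain n where n: "real c * \<delta> \<le> (\<Sum>j<n. x j)" by auto
    obtain j where j: "n \<le> j" "\<delta> < x j" using inf by auto
    have "(\<Sum>j<n. x j) \<le> (\<Sum>j<j. x j)" using mono j by auto
    then have "real (Suc c) * \<delta> \<le> (\<Sum>i<Suc j. x i)" using n j by (simp add: algebra_simps)
    then show ?case by blast
  qed
  moreover obtain c :: nat where "K < real c * \<delta>"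
    using d reals_Archimedean3 by blast
  ultimately show ?thesis by (meson less_le_trans)
qed

lemma trans_lborel:
  fixes g :: "real \<Rightarrow> ennreal"
  assumes [measurable]: "g \<in> borel_measurable borel"
  shows "(\<integral>\<^sup>+t. g (t + r) \<partial>lborel) = (\<integral>\<^sup>+w. g w \<partial>lborel)"
  using nn_integral_real_affine[of g 1 r] by (simp add: add.commute)

lemma refl_lborel:
  fixes g :: "real \<Rightarrow> ennreal"
  assumes [measurable]: "g \<in> borel_measurable borel"
  shows "(\<integral>\<^sup>+w. g (c - w) \<partial>lborel) = (\<integral>\<^sup>+w. g w \<partial>lborel)"
  using nn_integral_real_affine[of g "-1" c] by simp


locale renewal = mu_ass \<mu> + prob_space M
  for \<mu> :: "real measure" and M :: "'a measure" +
  fixes V :: "'a \<Rightarrow> nat option \<Rightarrow> real"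
  assumes indepV: "indep_vars (\<lambda>_. borel) (\<lambda>j \<omega>. V \<omega> j) UNIV"
    and law_T1: "distr M borel (\<lambda>\<omega>. V \<omega> None) = nu"
    and law_X: "\<And>k. distr M borel (\<lambda>\<omega>. V \<omega> (Some k)) = \<mu>"
begin

lemma rvV[measurable]: "(\<lambda>\<omega>. V \<omega> j) \<in> borel_measurable M"
  using indepV unfolding indep_vars_def by auto

lemma AE_T1: "AE \<omega> in M. 0 < V \<omega> None"
proof -
  have "AE t in nu. 0 < t"
    using nu_nonpos by (intro AE_I'[of "{..0}"]) (auto intro!: null_setsI)
  then have "AE t in distr M borel (\<lambda>\<omega>. V \<omega> None). 0 < t" unfolding law_T1 .
  then show ?thesis by (rule AE_distrD[rotated]) simp
qed

lemma AE_X: "AE \<omega> in M. 0 < V \<omega> (Some k) \<and> V \<omega> (Some k) \<le> TT"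
proof -
  have "AE t in distr M borel (\<lambda>\<omega>. V \<omega> (Some k)). 0 < t \<and> t \<le> TT" unfolding law_X by (rule AE_mu)
  then show ?thesis by (rule AE_distrD[rotated]) simp
qed

lemma prob_X_le: "prob {\<omega> \<in> space M. V \<omega> (Some k) \<le> d} = measure \<mu> {..d}"
proof -
  have "prob {\<omega> \<in> space M. V \<omega> (Some k) \<le> d} = measure (distr M borel (\<lambda>\<omega>. V \<omega> (Some k))) {..d}"
    by (subst measure_distr) (auto intro!: arg_cong[where f=prob])
  then show ?thesis using law_X by simp
qed

lemma AE_inf: "AE \<omega> in M. \<forall>N. \<exists>j\<ge>N. TT/2 < V \<omega> (Some j)"
proof -
  let ?d = "TT/2"
  let ?q = "measure \<mu> {..?d}"
  have q1: "?q < 1"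
  proof -
    have "?q = 1 - Fb ?d"
    proof -
      have "measure \<mu> {?d<..} = measure \<mu> (space \<mu> - {..?d})" using space_mu
        by (simp add: Compl_eq_Diff_UNIV[symmetric] not_le)
      then show ?thesis unfolding Fb_def by (simp add: MU.prob_compl)
    qed
    then show ?thesis using Fb_pos[of ?d] T_pos by simp
  qed
  have q0: "0 \<le> ?q" by simp
  have null: "prob {\<omega> \<in> space M. \<forall>j\<ge>N. V \<omega> (Some j) \<le> ?d} = 0" for N
  proof -
    let ?E = "{\<omega> \<in> space M. \<forall>j\<ge>N. V \<omega> (Some j) \<le> ?d}"
    have le: "prob ?E \<le> ?q ^ n" for n
    proof (cases "n = 0")
      case True then show ?thesis by simp
    next
      case False
      let ?J = "Some ` {N..<N+n}"
      have "?E \<subseteq> (\<Inter>j\<in>?J. (\<lambda>\<omega>. V \<omega> j) -` {..?d} \<inter> space M)" by auto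
      then have "prob ?E \<le> prob (\<Inter>j\<in>?J. (\<lambda>\<omega>. V \<omega> j) -` {..?d} \<inter> space M)"
        using False by (intro finite_measure_mono) auto
      also have "\<dots> = (\<Prod>j\<in>?J. prob ((\<lambda>\<omega>. V \<omega> j) -` {..?d} \<inter> space M))"
        using False by (intro indep_varsD[OF indepV]) auto
      also have "\<dots> = (\<Prod>j\<in>{N..<N+n}. prob ((\<lambda>\<omega>. V \<omega> (Some j)) -` {..?d} \<inter> space M))"
        by (subst prod.reindex) (auto simp: inj_on_def)
      also have "\<dots> = (\<Prod>j\<in>{N..<N+n}. ?q)"
      proof (intro prod.cong refl)
        fix j
        have "(\<lambda>\<omega>. V \<omega> (Some j)) -` {..?d} \<inter> space M = {\<omega> \<in> space M. V \<omega> (Some j) \<le> ?d}" by auto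
        then show "prob ((\<lambda>\<omega>. V \<omega> (Some j)) -` {..?d} \<inter> space M) = ?q" using prob_X_le[of j ?d] by (simp only:)
      qed
      also have "\<dots> = ?q ^ n" by simp
      finally show ?thesis .
    qed
    have "(\<lambda>n. ?q ^ n) \<longlonglongrightarrow> 0" using q0 q1 by (intro LIMSEQ_power_zero) simp
    then have "prob ?E \<le> 0" using le by (intro LIMSEQ_le_const) auto
    then show ?thesis using measure_nonneg[of M ?E] by linarith
  qed
  have "AE \<omega> in M. \<not> (\<forall>j\<ge>N. V \<omega> (Some j) \<le> ?d)" for N
    using null[of N] by (intro AE_I'[of "{\<omega> \<in> space M. \<forall>j\<ge>N. V \<omega> (Some j) \<le> ?d}"])
      (auto simp: null_sets_def emeasure_eq_measure)
  then have "AE \<omega> in M. \<forall>N. \<not> (\<forall>j\<ge>N. V \<omega> (Some j) \<le> ?d)" by (simp add: AE_all_countable)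
  then show ?thesis by (auto simp: not_le elim!: AE_mp)
qed

lemma AE_good: "AE \<omega> in M. ygood TT (V \<omega>)"
proof -
  have "AE \<omega> in M. \<forall>k. 0 < V \<omega> (Some k) \<and> V \<omega> (Some k) \<le> TT"
    using AE_X by (simp add: AE_all_countable)
  then show ?thesis using AE_T1 AE_inf
  proof (eventually_elim)
    case (elim \<omega>)
    have "\<exists>n. K < (\<Sum>j<n. V \<omega> (Some j))" for K
      using elim T_pos by (intro unbdd_sum[where \<delta>="TT/2"]) (auto intro: less_imp_le)
    then show ?case using elim unfolding ygood_def yS_def by auto
  qed
qed


lemma indep_sum_gen:
  assumes "finite I" "i \<notin> I"
  shows "indep_var borel (\<lambda>\<omega>. V \<omega> i) borel (\<lambda>\<omega>. \<Sum>j\<in>I. V \<omega> j)"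
  using indep_vars_sum[of I i "\<lambda>j \<omega>. V \<omega> j"] assms indep_vars_subset[OF indepV] by auto

lemma sum_Some: "(\<Sum>j\<in>Some ` {..<k}. V \<omega> j) = yS (V \<omega>) k"
  unfolding yS_def by (subst sum.reindex) (auto simp: inj_on_def)

lemma indep_T1_S: "indep_var borel (\<lambda>\<omega>. V \<omega> None) borel (\<lambda>\<omega>. yS (V \<omega>) k)"
  using indep_sum_gen[of "Some ` {..<k}" None] by (simp add: sum_Some)

lemma indep_X_S: "indep_var borel (\<lambda>\<omega>. V \<omega> (Some k)) borel (\<lambda>\<omega>. yS (V \<omega>) k)"
  using indep_sum_gen[of "Some ` {..<k}" "Some k"] by (auto simp: sum_Some)

lemma indep_X_arr: "indep_var borel (\<lambda>\<omega>. V \<omega> (Some k)) borel (\<lambda>\<omega>. yarr (V \<omega>) k)"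
proof -
  have "(\<Sum>j\<in>insert None (Some ` {..<k}). V \<omega> j) = yarr (V \<omega>) k" for \<omega>
    by (subst sum.insert) (auto simp: sum_Some yarr_def)
  then show ?thesis using indep_sum_gen[of "insert None (Some ` {..<k})" "Some k"] by auto
qed

lemma term_eq:
  "emeasure M {\<omega>\<in>space M. yarr (V \<omega>) k \<le> s \<and> s + x < yarr (V \<omega>) (Suc k)}
   = (\<integral>\<^sup>+\<omega>. indicator {..s} (yarr (V \<omega>) k) * ennreal (Fb (s + x - yarr (V \<omega>) k)) \<partial>M)"
proof -
  let ?h = "\<lambda>(a::real, b::real). indicator {..s} b * indicator {s + x - b<..} a :: ennreal"
  have "emeasure M {\<omega>\<in>space M. yarr (V \<omega>) k \<le> s \<and> s + x < yarr (V \<omega>) (Suc k)}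
      = (\<integral>\<^sup>+\<omega>. ?h (V \<omega> (Some k), yarr (V \<omega>) k) \<partial>M)"
  proof -
    have "emeasure M {\<omega>\<in>space M. yarr (V \<omega>) k \<le> s \<and> s + x < yarr (V \<omega>) (Suc k)}
      = (\<integral>\<^sup>+\<omega>. indicator {\<omega>\<in>space M. yarr (V \<omega>) k \<le> s \<and> s + x < yarr (V \<omega>) (Suc k)} \<omega> \<partial>M)"
      by (rule nn_integral_indicator[symmetric]) measurable
    also have "\<dots> = (\<integral>\<^sup>+\<omega>. ?h (V \<omega> (Some k), yarr (V \<omega>) k) \<partial>M)"
      by (intro nn_integral_cong) (auto simp: yarr_Suc split: split_indicator)
    finally show ?thesis .
  qed
  also have "\<dots> = (\<integral>\<^sup>+b. \<integral>\<^sup>+a. ?h (a, b) \<partial>(distr M borel (\<lambda>\<omega>. V \<omega> (Some k))) \<partial>(distr M borel (\<lambda>\<omega>. yarr (V \<omega>) k)))"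
  proof (rule indep_pair_nn(2)[OF indep_X_arr])
    have "?h = (\<lambda>(a, b). if b \<le> s \<and> s + x - b < a then 1 else 0)"
      by (auto simp: fun_eq_iff split: split_indicator)
    then show "?h \<in> borel_measurable (borel \<Otimes>\<^sub>M borel)" by simp
  qed
  also have "\<dots> = (\<integral>\<^sup>+b. indicator {..s} b * ennreal (Fb (s + x - b)) \<partial>(distr M borel (\<lambda>\<omega>. yarr (V \<omega>) k)))"
    unfolding law_X by (intro nn_integral_cong) (simp add: nn_integral_cmult_indicator Fb_emeasure)
  also have "\<dots> = (\<integral>\<^sup>+\<omega>. indicator {..s} (yarr (V \<omega>) k) * ennreal (Fb (s + x - yarr (V \<omega>) k)) \<partial>M)"
    by (subst nn_integral_distr) auto
  finally show ?thesis .
qed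

end


context renewal begin

lemma campbell:
  fixes f :: "real \<Rightarrow> ennreal"
  assumes f[measurable]: "f \<in> borel_measurable borel"
  shows "(\<Sum>k. \<integral>\<^sup>+\<omega>. f (yarr (V \<omega>) k) \<partial>M) = ennreal (1/mm) * (\<integral>\<^sup>+w. f w * indicator {0<..} w \<partial>lborel)"
proof -
  define c where "c = ennreal (1/mm)"
  define L where "L k = distr M borel (\<lambda>\<omega>. yS (V \<omega>) k)" for k
  define G where "G r w = c * f w * (if r < w then ennreal (Fb (w - r)) else 0)" for r w :: real
  define Q where "Q k \<omega> w = (if yS (V \<omega>) k < w \<and> w - yS (V \<omega>) k < V \<omega> (Some k) then 1 else 0 :: ennreal)" for k \<omega> w
  have Gm[measurable]: "case_prod G \<in> borel_measurable (borel \<Otimes>\<^sub>M borel)" unfolding G_def by measurable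
  have Qm[measurable]: "case_prod (Q k) \<in> borel_measurable (M \<Otimes>\<^sub>M borel)" for k unfolding Q_def by measurable
  have Qm'[measurable]: "(\<lambda>(w, \<omega>). Q k \<omega> w) \<in> borel_measurable (borel \<Otimes>\<^sub>M M)" for k unfolding Q_def by measurable
  have sL[simp, measurable_cong]: "sets (L k) = sets borel" for k unfolding L_def by simp
  interpret L: prob_space "L k" for k unfolding L_def by (intro prob_space_distr) simp

  have per_k: "(\<integral>\<^sup>+\<omega>. f (yarr (V \<omega>) k) \<partial>M) = (\<integral>\<^sup>+w. c * f w * (\<integral>\<^sup>+\<omega>. Q k \<omega> w \<partial>M) \<partial>lborel)" for k
  proof -
    have "(\<integral>\<^sup>+\<omega>. f (yarr (V \<omega>) k) \<partial>M) = (\<integral>\<^sup>+\<omega>. (\<lambda>(a, b). f (a + b)) (V \<omega> None, yS (V \<omega>) k) \<partial>M)"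
      by (simp add: yarr_def)
    also have "\<dots> = (\<integral>\<^sup>+b. \<integral>\<^sup>+a. f (a + b) \<partial>(distr M borel (\<lambda>\<omega>. V \<omega> None)) \<partial>(L k))"
      unfolding L_def by (subst indep_pair_nn(2)[OF indep_T1_S]) auto
    also have "\<dots> = (\<integral>\<^sup>+r. \<integral>\<^sup>+w. G r w \<partial>lborel \<partial>(L k))"
    proof (intro nn_integral_cong)
      fix r
      have "(\<integral>\<^sup>+a. f (a + r) \<partial>(distr M borel (\<lambda>\<omega>. V \<omega> None))) = (\<integral>\<^sup>+t. dens t * f (t + r) \<partial>lborel)"
        unfolding law_T1 by (rule nn_integral_nu) simp
      also have "\<dots> = (\<integral>\<^sup>+t. G r (t + r) \<partial>lborel)"
        by (intro nn_integral_cong) (auto simp: dens_alt G_def c_def mult_ac split: split_indicator)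
      also have "\<dots> = (\<integral>\<^sup>+w. G r w \<partial>lborel)"
        by (rule trans_lborel) simp
      finally show "(\<integral>\<^sup>+a. f (a + r) \<partial>(distr M borel (\<lambda>\<omega>. V \<omega> None))) = (\<integral>\<^sup>+w. G r w \<partial>lborel)" .
    qed
    also have "\<dots> = (\<integral>\<^sup>+w. \<integral>\<^sup>+r. G r w \<partial>(L k) \<partial>lborel)"
    proof -
      interpret P: pair_sigma_finite "L k" lborel ..
      have seq: "sets (L k \<Otimes>\<^sub>M lborel) = sets (borel \<Otimes>\<^sub>M borel)"
        by (intro sets_pair_measure_cong) simp_all
      have "case_prod G \<in> borel_measurable (L k \<Otimes>\<^sub>M lborel)"
        by (subst measurable_cong_sets[OF seq refl]) (rule Gm)
      then show ?thesis using P.Fubini'[of G] by simp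
    qed
    also have "\<dots> = (\<integral>\<^sup>+w. c * f w * (\<integral>\<^sup>+\<omega>. Q k \<omega> w \<partial>M) \<partial>lborel)"
    proof (intro nn_integral_cong)
      fix w :: real
      have "(\<integral>\<^sup>+r. G r w \<partial>(L k)) = c * f w * (\<integral>\<^sup>+r. (if r < w then ennreal (Fb (w - r)) else 0) \<partial>(L k))"
        unfolding G_def by (subst nn_integral_cmult[symmetric]) (auto simp: mult_ac)
      also have "(\<integral>\<^sup>+r. (if r < w then ennreal (Fb (w - r)) else 0) \<partial>(L k)) = (\<integral>\<^sup>+\<omega>. Q k \<omega> w \<partial>M)"
      proof -
        have "(\<integral>\<^sup>+\<omega>. Q k \<omega> w \<partial>M) = (\<integral>\<^sup>+\<omega>. (\<lambda>(a, b). if b < w \<and> w - b < a then 1 else 0 :: ennreal) (V \<omega> (Some k), yS (V \<omega>) k) \<partial>M)"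
          by (simp add: Q_def)
        also have "\<dots> = (\<integral>\<^sup>+b. \<integral>\<^sup>+a. (if b < w \<and> w - b < a then 1 else 0 :: ennreal) \<partial>(distr M borel (\<lambda>\<omega>. V \<omega> (Some k))) \<partial>(L k))"
          unfolding L_def by (subst indep_pair_nn(2)[OF indep_X_S]) auto
        also have "\<dots> = (\<integral>\<^sup>+b. (if b < w then ennreal (Fb (w - b)) else 0) \<partial>(L k))"
        proof (intro nn_integral_cong)
          fix b
          show "(\<integral>\<^sup>+a. (if b < w \<and> w - b < a then 1 else 0 :: ennreal) \<partial>(distr M borel (\<lambda>\<omega>. V \<omega> (Some k))))
             = (if b < w then ennreal (Fb (w - b)) else 0)"
          proof (cases "b < w")
            case True
            then have "(\<integral>\<^sup>+a. (if b < w \<and> w - b < a then 1 else 0 :: ennreal) \<partial>\<mu>) = (\<integral>\<^sup>+a. indicator {w - b<..} a \<partial>\<mu>)"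
              by (intro nn_integral_cong) (auto split: split_indicator)
            also have "\<dots> = ennreal (Fb (w - b))" by (simp add: Fb_emeasure)
            finally show ?thesis unfolding law_X using True by simp
          qed simp
        qed
        finally show ?thesis by simp
      qed
      finally show "(\<integral>\<^sup>+r. G r w \<partial>(L k)) = c * f w * (\<integral>\<^sup>+\<omega>. Q k \<omega> w \<partial>M)" .
    qed
    finally show ?thesis .
  qed

  have "(\<Sum>k. \<integral>\<^sup>+\<omega>. f (yarr (V \<omega>) k) \<partial>M) = (\<Sum>k. \<integral>\<^sup>+w. c * f w * (\<integral>\<^sup>+\<omega>. Q k \<omega> w \<partial>M) \<partial>lborel)"
    using per_k by simp
  also have "\<dots> = (\<integral>\<^sup>+w. (\<Sum>k. c * f w * (\<integral>\<^sup>+\<omega>. Q k \<omega> w \<partial>M)) \<partial>lborel)"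
    by (rule nn_integral_suminf[symmetric]) measurable
  also have "\<dots> = (\<integral>\<^sup>+w. \<integral>\<^sup>+\<omega>. c * f w * (\<Sum>k. Q k \<omega> w) \<partial>M \<partial>lborel)"
  proof (intro nn_integral_cong)
    fix w
    have "(\<Sum>k. c * f w * (\<integral>\<^sup>+\<omega>. Q k \<omega> w \<partial>M)) = c * f w * (\<Sum>k. \<integral>\<^sup>+\<omega>. Q k \<omega> w \<partial>M)"
      by simp
    also have "(\<Sum>k. \<integral>\<^sup>+\<omega>. Q k \<omega> w \<partial>M) = (\<integral>\<^sup>+\<omega>. (\<Sum>k. Q k \<omega> w) \<partial>M)"
      by (rule nn_integral_suminf[symmetric]) (simp add: Q_def)
    finally show "(\<Sum>k. c * f w * (\<integral>\<^sup>+\<omega>. Q k \<omega> w \<partial>M)) = (\<integral>\<^sup>+\<omega>. c * f w * (\<Sum>k. Q k \<omega> w) \<partial>M)"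
      by (simp add: nn_integral_cmult Q_def)
  qed
  also have "\<dots> = (\<integral>\<^sup>+\<omega>. \<integral>\<^sup>+w. c * f w * (\<Sum>k. Q k \<omega> w) \<partial>lborel \<partial>M)"
  proof -
    interpret P: pair_sigma_finite M lborel ..
    have "(\<lambda>(\<omega>, w). c * f w * (\<Sum>k. Q k \<omega> w)) \<in> borel_measurable (M \<Otimes>\<^sub>M lborel)"
      unfolding Q_def by measurable
    then show ?thesis using P.Fubini'[of "\<lambda>\<omega> w. c * f w * (\<Sum>k. Q k \<omega> w)"] by simp
  qed
  also have "\<dots> = (\<integral>\<^sup>+\<omega>. c * (\<integral>\<^sup>+w. f w * indicator {0<..} w \<partial>lborel) \<partial>M)"
  proof (intro nn_integral_cong_AE)
    show "AE \<omega> in M. (\<integral>\<^sup>+w. c * f w * (\<Sum>k. Q k \<omega> w) \<partial>lborel) = c * (\<integral>\<^sup>+w. f w * indicator {0<..} w \<partial>lborel)"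
      using AE_good
    proof (eventually_elim)
      case (elim \<omega>)
      have "AE w in lborel. w \<notin> range (yS (V \<omega>))"
        by (intro AE_I'[of "range (yS (V \<omega>))"] countable_imp_null_set_lborel) auto
      then have "AE w in lborel. c * f w * (\<Sum>k. Q k \<omega> w) = c * (f w * indicator {0<..} w)"
      proof (eventually_elim)
        case (elim w)
        then have "\<forall>n. yS (V \<omega>) n \<noteq> w" by auto
        note gs = gap_sum[OF \<open>ygood TT (V \<omega>)\<close> this]
        have "(\<lambda>k. Q k \<omega> w) = (\<lambda>k. indicator {yS (V \<omega>) k<..} w * indicator {w - yS (V \<omega>) k<..} (V \<omega> (Some k)))"
          by (auto simp: Q_def fun_eq_iff split: split_indicator)
        then have "(\<Sum>k. Q k \<omega> w) = indicator {0<..} w" using gs by simp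
        then show ?case by (simp add: mult_ac)
      qed
      then have "(\<integral>\<^sup>+w. c * f w * (\<Sum>k. Q k \<omega> w) \<partial>lborel) = (\<integral>\<^sup>+w. c * (f w * indicator {0<..} w) \<partial>lborel)"
        by (rule nn_integral_cong_AE)
      also have "\<dots> = c * (\<integral>\<^sup>+w. f w * indicator {0<..} w \<partial>lborel)"
        by (rule nn_integral_cmult) simp
      finally show ?case .
    qed
  qed
  also have "\<dots> = c * (\<integral>\<^sup>+w. f w * indicator {0<..} w \<partial>lborel)"
    by (simp add: emeasure_space_1)
  finally show ?thesis unfolding c_def .
qed

lemma nu_tail_int: "emeasure nu {y<..} = ennreal (1/mm) * (\<integral>\<^sup>+t. indicator {0<..} t * ennreal (Fb t) * indicator {y<..} t \<partial>lborel)"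
  by (subst emeasure_nu) (auto simp: dens_alt mult_ac nn_integral_cmult[symmetric])

lemma tail_split:
  assumes s: "0 \<le> s" and x: "0 \<le> x"
  shows "(\<integral>\<^sup>+t. indicator {0<..} t * ennreal (Fb t) * indicator {x<..} t \<partial>lborel)
     = (\<integral>\<^sup>+t. indicator {0<..} t * ennreal (Fb t) * indicator {s+x<..} t \<partial>lborel)
       + (\<integral>\<^sup>+w. indicator {..s} w * ennreal (Fb (s + x - w)) * indicator {0<..} w \<partial>lborel)"
proof -
  have "(\<integral>\<^sup>+t. indicator {0<..} t * ennreal (Fb t) * indicator {x<..} t \<partial>lborel)
     = (\<integral>\<^sup>+t. indicator {0<..} t * ennreal (Fb t) * indicator {s+x<..} t
           + ennreal (Fb t) * indicator {x<..s+x} t \<partial>lborel)"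
    using s x by (intro nn_integral_cong) (auto split: split_indicator)
  also have "\<dots> = (\<integral>\<^sup>+t. indicator {0<..} t * ennreal (Fb t) * indicator {s+x<..} t \<partial>lborel)
      + (\<integral>\<^sup>+t. ennreal (Fb t) * indicator {x<..s+x} t \<partial>lborel)"
    by (rule nn_integral_add) auto
  also have "(\<integral>\<^sup>+t. ennreal (Fb t) * indicator {x<..s+x} t \<partial>lborel)
      = (\<integral>\<^sup>+w. ennreal (Fb (s + x - w)) * indicator {x<..s+x} (s + x - w) \<partial>lborel)"
    by (rule refl_lborel[symmetric]) simp
  also have "\<dots> = (\<integral>\<^sup>+w. indicator {..s} w * ennreal (Fb (s + x - w)) * indicator {0<..} w \<partial>lborel)"
  proof (rule nn_integral_cong_AE)
    have "AE w in lborel. w \<notin> {0, s}"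
      by (intro AE_I'[of "{0, s}"] countable_imp_null_set_lborel) auto
    then show "AE w in lborel. ennreal (Fb (s + x - w)) * indicator {x<..s+x} (s + x - w)
        = indicator {..s} w * ennreal (Fb (s + x - w)) * indicator {0<..} w"
      by eventually_elim (auto split: split_indicator)
  qed
  finally show ?thesis .
qed

end

lemma nren_iff:
  assumes g: "ygood B y" and x: "0 \<le> x"
  shows "(\<not> yren y s (s + x)) \<longleftrightarrow> (s + x < y None \<or> (\<exists>k. yarr y k \<le> s \<and> s + x < yarr y (Suc k)))"
proof
  assume nr: "\<not> yren y s (s + x)"
  show "s + x < y None \<or> (\<exists>k. yarr y k \<le> s \<and> s + x < yarr y (Suc k))"
  proof (cases "s + x < y None")
    case False
    have "\<not> (s < yarr y 0 \<and> yarr y 0 \<le> s + x)" using nr unfolding yren_def by blast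
    then have "y None \<le> s" using False by (simp add: yarr_def)
    obtain n where n: "s < yarr y n" using yarr_unbdd[OF g] by blast
    define n0 where "n0 = (LEAST n. s < yarr y n)"
    have n0: "s < yarr y n0" unfolding n0_def using n by (rule LeastI)
    have "n0 \<noteq> 0" using n0 \<open>y None \<le> s\<close> by (cases n0) (auto simp: yarr_def)
    then obtain k where k: "n0 = Suc k" by (cases n0) auto
    have "k < n0" using k by simp
    then have "\<not> s < yarr y k" unfolding n0_def by (rule not_less_Least)
    moreover have "s + x < yarr y (Suc k)" using nr n0 k unfolding yren_def by (auto simp: not_le)
    ultimately show ?thesis by auto
  qed simp
next
  assume H: "s + x < y None \<or> (\<exists>k. yarr y k \<le> s \<and> s + x < yarr y (Suc k))"
  show "\<not> yren y s (s + x)"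
  proof
    assume "yren y s (s + x)"
    then obtain j where j: "s < yarr y j" "yarr y j \<le> s + x" unfolding yren_def by auto
    from H show False
    proof
      assume "s + x < y None" then show False using j yarr_ge[OF g, of j] by simp
    next
      assume "\<exists>k. yarr y k \<le> s \<and> s + x < yarr y (Suc k)"
      then obtain k where k: "yarr y k \<le> s" "s + x < yarr y (Suc k)" by auto
      show False
      proof (cases "j \<le> k")
        case True then show False using yarr_mono[OF g True] k j by simp
      next
        case False then have "Suc k \<le> j" by simp
        then show False using yarr_mono[OF g, of "Suc k" j] k j by simp
      qed
    qed
  qed
qed

context renewal begin

lemma nbar:
  assumes s: "0 \<le> s" and x: "0 \<le> x"
  shows "emeasure M {\<omega>\<in>space M. \<not> yren (V \<omega>) s (s + x)} = emeasure nu {x<..}"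
proof -
  let ?A1 = "{\<omega>\<in>space M. ygood TT (V \<omega>) \<and> s + x < V \<omega> None}"
  let ?B = "\<lambda>k. {\<omega>\<in>space M. ygood TT (V \<omega>) \<and> yarr (V \<omega>) k \<le> s \<and> s + x < yarr (V \<omega>) (Suc k)}"
  have "emeasure M {\<omega>\<in>space M. \<not> yren (V \<omega>) s (s + x)} = emeasure M (?A1 \<union> (\<Union>k. ?B k))"
  proof (rule emeasure_eq_AE)
    show "AE \<omega> in M. (\<omega> \<in> {\<omega> \<in> space M. \<not> yren (V \<omega>) s (s + x)}) = (\<omega> \<in> ?A1 \<union> (\<Union>k. ?B k))"
      using AE_good by eventually_elim (use nren_iff[OF _ x] in auto)
  qed measurable
  also have "\<dots> = emeasure M ?A1 + emeasure M (\<Union>k. ?B k)"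
  proof (rule plus_emeasure[symmetric])
    show "?A1 \<inter> (\<Union>k. ?B k) = {}"
    proof (rule equals0I)
      fix \<omega> assume "\<omega> \<in> ?A1 \<inter> (\<Union>k. ?B k)"
      then obtain k where "ygood TT (V \<omega>)" "s + x < V \<omega> None" "yarr (V \<omega>) k \<le> s" by auto
      then show False using yarr_ge[of TT "V \<omega>" k] x by simp
    qed
  qed measurable
  also have "emeasure M (\<Union>k. ?B k) = (\<Sum>k. emeasure M (?B k))"
  proof (rule suminf_emeasure[symmetric])
    show "disjoint_family ?B"
    proof (unfold disjoint_family_on_def, intro ballI impI)
      fix k k' :: nat assume "k \<noteq> k'"
      then consider "k < k'" | "k' < k" by linarith
      then show "?B k \<inter> ?B k' = {}"
      proof cases
        case 1
        then have "Suc k \<le> k'" by simp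
        then show ?thesis using yarr_mono[of TT _ "Suc k" k'] x by fastforce
      next
        case 2
        then have "Suc k' \<le> k" by simp
        then show ?thesis using yarr_mono[of TT _ "Suc k'" k] x by fastforce
      qed
    qed
  qed auto
  also have "emeasure M ?A1 = emeasure nu {s + x<..}"
  proof -
    have "emeasure M ?A1 = emeasure M {\<omega>\<in>space M. s + x < V \<omega> None}"
      by (rule emeasure_eq_AE) (use AE_good in auto)
    also have "\<dots> = emeasure (distr M borel (\<lambda>\<omega>. V \<omega> None)) {s + x<..}"
      by (subst emeasure_distr) (auto intro!: arg_cong[where f="emeasure M"])
    finally show ?thesis unfolding law_T1 .
  qed
  also have "(\<Sum>k. emeasure M (?B k)) = (\<Sum>k. \<integral>\<^sup>+\<omega>. indicator {..s} (yarr (V \<omega>) k) * ennreal (Fb (s + x - yarr (V \<omega>) k)) \<partial>M)"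
  proof (intro suminf_cong)
    fix k
    have "emeasure M (?B k) = emeasure M {\<omega>\<in>space M. yarr (V \<omega>) k \<le> s \<and> s + x < yarr (V \<omega>) (Suc k)}"
      by (rule emeasure_eq_AE) (use AE_good in auto)
    then show "emeasure M (?B k) = (\<integral>\<^sup>+\<omega>. indicator {..s} (yarr (V \<omega>) k) * ennreal (Fb (s + x - yarr (V \<omega>) k)) \<partial>M)"
      using term_eq by simp
  qed
  also have "\<dots> = ennreal (1/mm) * (\<integral>\<^sup>+w. indicator {..s} w * ennreal (Fb (s + x - w)) * indicator {0<..} w \<partial>lborel)"
    by (rule campbell) simp
  also have "emeasure nu {s + x<..} + \<dots> = emeasure nu {x<..}"
    unfolding nu_tail_int tail_split[OF s x] by (simp add: distrib_left)
  finally show ?thesis .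
qed

end


lemma yren_split:
  assumes "0 \<le> x" "0 \<le> z"
  shows "yren y s (s + (x + z)) \<longleftrightarrow> yren y s (s + x) \<or> yren y (s + x) (s + x + z)"
proof
  assume "yren y s (s + (x + z))"
  then obtain k where k: "s < yarr y k" "yarr y k \<le> s + (x + z)" unfolding yren_def by auto
  show "yren y s (s + x) \<or> yren y (s + x) (s + x + z)"
  proof (cases "yarr y k \<le> s + x")
    case True then show ?thesis using k unfolding yren_def by auto
  next
    case False then show ?thesis using k unfolding yren_def by (auto simp: add.assoc)
  qed
next
  assume "yren y s (s + x) \<or> yren y (s + x) (s + x + z)"
  then show "yren y s (s + (x + z))" using assms unfolding yren_def
    by (elim disjE exE) (auto intro!: exI simp: add.assoc)
qed

context renewal begin

lemma nu_prob: "prob_space nu"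
  by (subst law_T1[symmetric]) (rule prob_space_distr, simp)

lemma prob_ren:
  assumes s: "0 \<le> s" and x: "0 \<le> x"
  shows "prob {\<omega>\<in>space M. yren (V \<omega>) s (s + x)} = 1 - measure nu {x<..}"
proof -
  interpret N: prob_space nu by (rule nu_prob)
  have "{\<omega>\<in>space M. yren (V \<omega>) s (s + x)} = space M - {\<omega>\<in>space M. \<not> yren (V \<omega>) s (s + x)}" by auto
  then have "prob {\<omega>\<in>space M. yren (V \<omega>) s (s + x)} = 1 - prob {\<omega>\<in>space M. \<not> yren (V \<omega>) s (s + x)}"
    by (simp add: prob_compl)
  also have "prob {\<omega>\<in>space M. \<not> yren (V \<omega>) s (s + x)} = measure nu {x<..}"
    using nbar[OF s x] by (simp add: measure_def)
  finally show ?thesis .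
qed

lemma prob_ren2:
  assumes s: "0 \<le> s" and x: "0 \<le> x" and z: "0 \<le> z"
  shows "prob {\<omega>\<in>space M. yren (V \<omega>) s (s + x) \<and> yren (V \<omega>) (s + x) (s + x + z)}
     = 1 - measure nu {x<..} - measure nu {z<..} + measure nu {x + z<..}"
proof -
  let ?A = "{\<omega>\<in>space M. yren (V \<omega>) s (s + x)}"
  let ?B = "{\<omega>\<in>space M. yren (V \<omega>) (s + x) (s + x + z)}"
  have AB: "?A \<inter> ?B = {\<omega>\<in>space M. yren (V \<omega>) s (s + x) \<and> yren (V \<omega>) (s + x) (s + x + z)}" by auto
  have U: "?A \<union> ?B = {\<omega>\<in>space M. yren (V \<omega>) s (s + (x + z))}" using yren_split[OF x z] by auto
  have sA: "?A \<in> events" and sB: "?B \<in> events" by measurable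
  have 1: "prob (?A \<union> ?B) = prob ?A + prob (?B - ?A)" using sA sB by (rule finite_measure_Union')
  have 2: "prob (?B - ?A) = prob ?B - prob (?B \<inter> ?A)" using sB sA by (rule finite_measure_Diff')
  have pA: "prob ?A = 1 - measure nu {x<..}" using prob_ren[OF s x] .
  have pB: "prob ?B = 1 - measure nu {z<..}" using prob_ren[of "s + x" z] s x z by simp
  have pU: "prob (?A \<union> ?B) = 1 - measure nu {x + z<..}" unfolding U using prob_ren[of s "x + z"] s x z by simp
  have "prob (?A \<inter> ?B) = prob ?A + prob ?B - prob (?A \<union> ?B)"
    using 1 2 by (simp add: Int_commute)
  then show ?thesis unfolding AB pA pB pU by simp
qed

end

definition ylast :: "(nat option \<Rightarrow> real) \<Rightarrow> real \<Rightarrow> nat" where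
  "ylast y t = (LEAST n. t < yarr y n)"

lemma count_set:
  assumes g: "ygood B y"
  shows "{k. yarr y k \<le> t} = {..<ylast y t}"
proof -
  obtain n where n: "t < yarr y n" using yarr_unbdd[OF g] by blast
  have L: "t < yarr y (ylast y t)" unfolding ylast_def using n by (rule LeastI)
  show ?thesis
  proof (intro set_eqI iffI)
    fix k assume k: "k \<in> {k. yarr y k \<le> t}"
    show "k \<in> {..<ylast y t}"
    proof (rule ccontr)
      assume "k \<notin> {..<ylast y t}"
      then have "ylast y t \<le> k" by simp
      then have "yarr y (ylast y t) \<le> yarr y k" by (rule yarr_mono[OF g])
      then show False using k L by simp
    qed
  next
    fix k assume "k \<in> {..<ylast y t}"
    then have "k < ylast y t" by simp
    then have "\<not> t < yarr y k" unfolding ylast_def by (rule not_less_Least)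
    then show "k \<in> {k. yarr y k \<le> t}" by simp
  qed
qed

lemma SR_count_good: "ygood B y \<Longrightarrow> SR_count y t = ylast y t"
proof -
  assume g: "ygood B y"
  have "SR_count y t = card {k. yarr y k \<le> t}" unfolding SR_count_def yarr_def yS_def ..
  then show ?thesis using count_set[OF g] by simp
qed

lemma SR_count_less:
  assumes g: "ygood B y"
  shows "SR_count y a < SR_count y b \<longleftrightarrow> yren y a b"
proof -
  have La: "a < yarr y (ylast y a)" and Lb: "b < yarr y (ylast y b)"
    using count_set[OF g, of a] count_set[OF g, of b] yarr_unbdd[OF g]
    unfolding ylast_def by (metis LeastI)+
  have ina: "yarr y k \<le> a \<longleftrightarrow> k < ylast y a" for k using count_set[OF g, of a] by blast
  have inb: "yarr y k \<le> b \<longleftrightarrow> k < ylast y b" for k using count_set[OF g, of b] by blast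
  show ?thesis unfolding SR_count_good[OF g] yren_def
  proof
    assume "ylast y a < ylast y b"
    then show "\<exists>k. a < yarr y k \<and> yarr y k \<le> b" using ina[of "ylast y a"] inb[of "ylast y a"]
      by (intro exI[of _ "ylast y a"]) (auto simp: not_le)
  next
    assume "\<exists>k. a < yarr y k \<and> yarr y k \<le> b"
    then obtain k where "a < yarr y k" "yarr y k \<le> b" by auto
    then show "ylast y a < ylast y b" using ina[of k] inb[of k] by linarith
  qed
qed

lemma SR_count_zero: "ygood B y \<Longrightarrow> SR_count y 0 = 0"
  using SR_count_less[of B y 0 0] count_set[of B y 0] yarr_pos[of B y]
  by (simp add: SR_count_good) (metis lessThan_iff mem_Collect_eq not_less neq0_conv)


lemma restrict_UNIV'[simp]: "restrict f UNIV = f" by (simp add: restrict_def)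

abbreviation PB :: "(nat option \<Rightarrow> real) measure" where
  "PB \<equiv> PiM UNIV (\<lambda>_. borel)"

locale msetup = mu_ass \<mu> + prob_space M
  for \<mu> :: "real measure" and M :: "'a measure" +
  fixes Y :: "int \<Rightarrow> nat option \<Rightarrow> 'a \<Rightarrow> real" and t0 t1 :: real
  assumes indep: "indep_vars (\<lambda>_. borel) (\<lambda>(i, j). Y i j) UNIV"
    and law_first: "\<And>i. distr M borel (Y i None) = nu"
    and law_inter: "\<And>i k. distr M borel (Y i (Some k)) = \<mu>"
    and t0: "0 \<le> t0" and t01: "t0 < t1" and t10: "t1 < t0 + 1"
begin

abbreviation "SR \<equiv> SR_space \<mu>"
definition W :: "int \<Rightarrow> 'a \<Rightarrow> nat option \<Rightarrow> real" where "W i \<omega> = (\<lambda>j. Y i j \<omega>)"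

lemma W_eq: "W i = (\<lambda>\<omega> j. Y i j \<omega>)" by (simp add: W_def fun_eq_iff)

lemma rvY[measurable]: "Y i j \<in> borel_measurable M"
  using indep unfolding indep_vars_def by auto

lemma W_comp[measurable]: "(\<lambda>\<omega>. W i \<omega> j) \<in> borel_measurable M"
  unfolding W_def by simp

lemma W_meas[measurable]: "W i \<in> measurable M PB"
proof -
  have "(\<lambda>\<omega>. \<lambda>j\<in>UNIV. Y i j \<omega>) \<in> measurable M PB" by (intro measurable_restrict) simp
  then show ?thesis by (simp add: W_eq)
qed

lemma nu_prob: "prob_space nu"
  by (subst law_first[of 0, symmetric]) (rule prob_space_distr, simp)

lemma SR_prob: "prob_space SR"
  unfolding SR_space_def using nu_prob MU.prob_space_axioms
  by (intro prob_space_PiM) (auto split: option.split)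

lemma sets_SR[measurable_cong]: "sets SR = sets PB"
  unfolding SR_space_def by (intro sets_PiM_cong) (auto split: option.split simp: mu_sets)

lemma space_SR: "space SR = UNIV"
  using sets_eq_imp_space_eq[OF sets_SR] by (simp add: space_PiM)

lemma distr_W: "distr M PB (W i) = SR"
proof -
  let ?D = "\<lambda>p. distr M borel ((\<lambda>(i, j). Y i j) p)"
  have "distr M (PiM UNIV (\<lambda>_. borel)) (\<lambda>x. \<lambda>p\<in>UNIV. (\<lambda>(i, j). Y i j) p x) = PiM UNIV ?D"
    using indep by (subst (asm) indep_vars_iff_distr_eq_PiM') auto
  then have eq: "distr M (PiM UNIV (\<lambda>_. borel)) (\<lambda>x. \<lambda>p. (\<lambda>(i, j). Y i j) p x) = PiM UNIV ?D"
    by simp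
  have pD: "prob_space (?D p)" for p by (intro prob_space_distr) (auto split: prod.split)
  have "distr (PiM UNIV ?D) (\<Pi>\<^sub>M j\<in>UNIV. ?D (i, j)) (\<lambda>\<omega>. \<lambda>n\<in>UNIV. \<omega> (i, n)) = (\<Pi>\<^sub>M j\<in>UNIV. ?D (i, j))"
    using pD by (intro distr_PiM_reindex) (auto simp: inj_on_def)
  moreover have "(\<Pi>\<^sub>M j\<in>UNIV. ?D (i, j)) = SR"
    unfolding SR_space_def by (intro PiM_cong) (auto split: option.split simp: law_first law_inter)
  ultimately have 1: "distr (PiM UNIV ?D) SR (\<lambda>\<omega> n. \<omega> (i, n)) = SR" by simp
  have sD: "sets (PiM UNIV ?D) = sets (PiM UNIV (\<lambda>_::int \<times> nat option. borel::real measure))"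
    by (intro sets_PiM_cong) auto
  have m1: "(\<lambda>\<omega> n. \<omega> (i, n)) \<in> measurable (PiM UNIV (\<lambda>_::int \<times> nat option. borel::real measure)) SR"
  proof -
    have "(\<lambda>\<omega>. \<lambda>n\<in>UNIV. \<omega> (i, n)) \<in> measurable (PiM UNIV (\<lambda>_::int \<times> nat option. borel::real measure)) PB"
      by (intro measurable_restrict) simp
    then show ?thesis by (simp add: measurable_cong_sets[OF refl sets_SR])
  qed
  have m2: "(\<lambda>x p. (\<lambda>(i, j). Y i j) p x) \<in> measurable M (PiM UNIV (\<lambda>_::int \<times> nat option. borel::real measure))"
  proof -
    have "(\<lambda>x. \<lambda>p\<in>UNIV. (\<lambda>(i, j). Y i j) p x) \<in> measurable M (PiM UNIV (\<lambda>_::int \<times> nat option. borel::real measure))"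
      by (intro measurable_restrict) (auto split: prod.split)
    then show ?thesis by simp
  qed
  have "distr (PiM UNIV ?D) SR (\<lambda>\<omega> n. \<omega> (i, n))
      = distr (distr M (PiM UNIV (\<lambda>_. borel)) (\<lambda>x. \<lambda>p. (\<lambda>(i, j). Y i j) p x)) SR (\<lambda>\<omega> n. \<omega> (i, n))"
    unfolding eq ..
  also have "\<dots> = distr M SR ((\<lambda>\<omega> n. \<omega> (i, n)) \<circ> (\<lambda>x p. (\<lambda>(i, j). Y i j) p x))"
    by (rule distr_distr[OF m1 m2])
  also have "\<dots> = distr M SR (W i)" by (simp add: W_eq o_def)
  finally have "distr M SR (W i) = SR" using 1 by simp
  moreover have "distr M PB (W i) = distr M SR (W i)"
    by (intro distr_cong) (auto simp: sets_SR)
  ultimately show ?thesis by simp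
qed

lemma indep_W: "indep_vars (\<lambda>_. PB) W UNIV"
proof -
  have 1: "indep_vars (\<lambda>i. PiM ({i} \<times> UNIV) (\<lambda>_. borel))
      (\<lambda>i \<omega>. restrict (\<lambda>p. (\<lambda>(i, j). Y i j) p \<omega>) ({i} \<times> UNIV)) UNIV"
    using indep by (rule indep_vars_restrict) (auto simp: disjoint_family_on_def)
  have 2: "indep_vars (\<lambda>_. PB) (\<lambda>i \<omega>. (\<lambda>f. \<lambda>j. f (i, j)) (restrict (\<lambda>p. (\<lambda>(i, j). Y i j) p \<omega>) ({i} \<times> UNIV))) UNIV"
  proof (rule indep_vars_compose2[OF 1])
    fix i :: int
    have "(\<lambda>f. \<lambda>j\<in>UNIV. f (i, j)) \<in> measurable (PiM ({i} \<times> UNIV) (\<lambda>_. borel)) PB"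
      by (intro measurable_restrict) (auto intro!: measurable_component_singleton)
    then show "(\<lambda>f. \<lambda>j. f (i, j)) \<in> measurable (PiM ({i} \<times> UNIV) (\<lambda>_. borel)) PB" by simp
  qed
  have "(\<lambda>i \<omega>. (\<lambda>f. \<lambda>j. f (i, j)) (restrict (\<lambda>p. (\<lambda>(i, j). Y i j) p \<omega>) ({i} \<times> UNIV))) = W"
    by (simp add: W_def fun_eq_iff)
  then show ?thesis using 2 by simp
qed

lemma SR_renewal: "renewal \<mu> SR (\<lambda>y. y)"
proof -
  interpret S: prob_space SR by (rule SR_prob)
  have comp: "distr SR borel (\<lambda>y. y j) = (case j of None \<Rightarrow> nu | Some k \<Rightarrow> \<mu>)" for j
  proof -
    have "distr SR borel (\<lambda>y. y j) = distr SR (case j of None \<Rightarrow> nu | Some k \<Rightarrow> \<mu>) (\<lambda>y. y j)"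
      by (intro distr_cong) (auto split: option.split simp: mu_sets)
    also have "\<dots> = (case j of None \<Rightarrow> nu | Some k \<Rightarrow> \<mu>)"
      unfolding SR_space_def using nu_prob MU.prob_space_axioms
      by (subst distr_PiM_component) (auto split: option.split)
    finally show ?thesis .
  qed
  have ind: "S.indep_vars (\<lambda>_. borel) (\<lambda>j y. y j) UNIV"
  proof (subst S.indep_vars_iff_distr_eq_PiM')
    show "distr SR (PiM UNIV (\<lambda>_. borel)) (\<lambda>x. \<lambda>j\<in>UNIV. x j) = (\<Pi>\<^sub>M j\<in>UNIV. distr SR borel (\<lambda>y. y j))"
    proof -
      have "distr SR (PiM UNIV (\<lambda>_. borel)) (\<lambda>x. \<lambda>j\<in>UNIV. x j) = distr SR PB (\<lambda>x. x)" by simp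
      also have "\<dots> = SR" by (rule distr_id2) (simp add: sets_SR)
      also have "\<dots> = (\<Pi>\<^sub>M j\<in>UNIV. distr SR borel (\<lambda>y. y j))"
      proof -
        have "(\<lambda>j. distr SR borel (\<lambda>y. y j)) = (\<lambda>j. case j of None \<Rightarrow> nu | Some k \<Rightarrow> \<mu>)"
          using comp by (simp add: fun_eq_iff)
        then show ?thesis by (simp add: SR_space_def)
      qed
      finally show ?thesis .
    qed
  qed (auto simp: measurable_cong_sets[OF sets_SR refl])
  show ?thesis
  proof (unfold_locales)
    show "S.indep_vars (\<lambda>_. borel) (\<lambda>j y. y j) UNIV" by (rule ind)
    show "distr SR borel (\<lambda>y. y None) = nu" using comp[of None] by simp
    show "distr SR borel (\<lambda>y. y (Some k)) = \<mu>" for k using comp[of "Some k"] by simp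
  qed
qed

sublocale SRr: renewal \<mu> SR "\<lambda>y. y" by (rule SR_renewal)

lemma prob_W: "A \<in> sets SR \<Longrightarrow> prob (W i -` A \<inter> space M) = SRr.prob A"
proof -
  assume A: "A \<in> sets SR"
  have "prob (W i -` A \<inter> space M) = measure (distr M PB (W i)) A"
    using A by (subst measure_distr) (auto simp: sets_SR)
  then show ?thesis by (simp add: distr_W)
qed

lemma AE_W: "(AE y in SR. P y) \<Longrightarrow> AE \<omega> in M. P (W i \<omega>)"
proof -
  assume "AE y in SR. P y"
  then have "AE y in distr M PB (W i). P y" unfolding distr_W .
  then show ?thesis by (rule AE_distrD[rotated]) simp
qed

lemma AE_good_all: "AE \<omega> in M. \<forall>i. ygood TT (W i \<omega>)"
  unfolding AE_all_countable using SRr.AE_good by (intro allI AE_W) simp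

end


context msetup begin

definition "u = t1 - t0"
definition "a0 = TT * t0"
definition "a1 = TT * t1"
definition z0 :: "int \<Rightarrow> 'a \<Rightarrow> bool" where "z0 i \<omega> \<longleftrightarrow> yren (W i \<omega>) a0 a1"
definition z1 :: "real \<Rightarrow> int \<Rightarrow> 'a \<Rightarrow> bool" where "z1 h i \<omega> \<longleftrightarrow> yren (W i \<omega>) a1 (TT * (t1 + h))"
definition inC :: "int \<Rightarrow> 'a \<Rightarrow> bool" where "inC i \<omega> \<longleftrightarrow> (\<forall>k. min 0 i \<le> k \<and> k \<le> max 0 i \<longrightarrow> z0 k \<omega>)"
definition Qh :: "real \<Rightarrow> 'a \<Rightarrow> bool" where "Qh h \<omega> \<longleftrightarrow> (\<forall>i. inC i \<omega> \<longrightarrow> z1 h i \<omega>)"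
definition Gd :: "'a \<Rightarrow> bool" where "Gd \<omega> \<longleftrightarrow> (\<forall>i. ygood TT (W i \<omega>))"

lemma u_pos: "0 < u" and u_lt1: "u < 1" using t01 t10 by (auto simp: u_def)
lemma a1_eq: "a1 = a0 + TT * u" by (simp add: a1_def a0_def u_def algebra_simps)
lemma a0_nn: "0 \<le> a0" using t0 T_pos by (simp add: a0_def)

lemma meas_z0[measurable]: "Measurable.pred M (z0 i)" unfolding z0_def by measurable
lemma meas_z1[measurable]: "Measurable.pred M (z1 h i)" unfolding z1_def by measurable
lemma meas_inC[measurable]: "Measurable.pred M (inC i)" unfolding inC_def by measurable
lemma meas_Qh[measurable]: "Measurable.pred M (Qh h)" unfolding Qh_def by measurable
lemma meas_Gd[measurable]: "Measurable.pred M Gd" unfolding Gd_def by measurable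
lemma AE_Gd: "AE \<omega> in M. Gd \<omega>" unfolding Gd_def by (rule AE_good_all)

lemma min_diff: "min ((n::nat) - m) 1 = (if m < n then 1 else 0)" by auto

lemma zeta0: "Gd \<omega> \<Longrightarrow> SR_zeta \<mu> Y t0 (t1 - t0) i \<omega> = (if z0 i \<omega> then 1 else 0)"
proof -
  assume "Gd \<omega>"
  then have g: "ygood TT (W i \<omega>)" by (simp add: Gd_def)
  have "SR_zeta \<mu> Y t0 (t1 - t0) i \<omega> = min (SR_count (W i \<omega>) a1 - SR_count (W i \<omega>) a0) 1"
    unfolding SR_zeta_def SR_N_def W_def a1_def a0_def by simp
  then show ?thesis unfolding min_diff SR_count_less[OF g] z0_def by simp
qed

lemma zeta1: "Gd \<omega> \<Longrightarrow> SR_zeta \<mu> Y t1 t i \<omega> = (if yren (W i \<omega>) a1 (TT * (t1 + t)) then 1 else 0)"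
proof -
  assume "Gd \<omega>"
  then have g: "ygood TT (W i \<omega>)" by (simp add: Gd_def)
  have "SR_zeta \<mu> Y t1 t i \<omega> = min (SR_count (W i \<omega>) (TT * (t1 + t)) - SR_count (W i \<omega>) a1) 1"
    unfolding SR_zeta_def SR_N_def W_def a1_def by simp
  then show ?thesis unfolding min_diff SR_count_less[OF g] by simp
qed

lemma C_iff: "Gd \<omega> \<Longrightarrow> i \<in> consec_comp (\<lambda>i. SR_zeta \<mu> Y t0 (t1 - t0) i \<omega>) 0 \<longleftrightarrow> inC i \<omega>"
proof -
  assume G: "Gd \<omega>"
  have m: "min 0 i \<le> 0 \<and> 0 \<le> max 0 i" by simp
  show ?thesis unfolding consec_comp_def inC_def zeta0[OF G]
  proof (cases "z0 0 \<omega>")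
    case False
    show "(i \<in> (if (if z0 0 \<omega> then 1 else 0::nat) = 0 then {} else {j. \<forall>k. min 0 j \<le> k \<and> k \<le> max 0 j \<longrightarrow> (if z0 k \<omega> then 1 else 0::nat) = 1}))
      = (\<forall>k. min 0 i \<le> k \<and> k \<le> max 0 i \<longrightarrow> z0 k \<omega>)"
    proof -
      have "\<not> (\<forall>k. min 0 i \<le> k \<and> k \<le> max 0 i \<longrightarrow> z0 k \<omega>)"
        using m False by blast
      then show ?thesis using False by simp
    qed
  qed (simp, blast)
qed

lemma ren_mono: "t \<le> t' \<Longrightarrow> yren y a (TT * (t1 + t)) \<Longrightarrow> yren y a (TT * (t1 + t'))"
proof -
  assume "t \<le> t'" "yren y a (TT * (t1 + t))"
  moreover have "TT * (t1 + t) \<le> TT * (t1 + t')" using \<open>t \<le> t'\<close> T_pos by (intro mult_left_mono) auto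
  ultimately show ?thesis unfolding yren_def by (meson order_trans)
qed

lemma ren_first:
  assumes g: "ygood TT y"
  shows "yren y a b \<longleftrightarrow> yarr y (ylast y a) \<le> b"
proof -
  obtain n where n: "a < yarr y n" using yarr_unbdd[OF g] by blast
  have L: "a < yarr y (ylast y a)" unfolding ylast_def using n by (rule LeastI)
  have ina: "yarr y k \<le> a \<longleftrightarrow> k < ylast y a" for k using count_set[OF g, of a] by blast
  show ?thesis
  proof
    assume "yren y a b"
    then obtain k where k: "a < yarr y k" "yarr y k \<le> b" unfolding yren_def by auto
    then have "ylast y a \<le> k" using ina[of k] by linarith
    then show "yarr y (ylast y a) \<le> b" using yarr_mono[OF g] k by (meson order_trans)
  next
    assume "yarr y (ylast y a) \<le> b"
    then show "yren y a b" using L unfolding yren_def by blast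
  qed
qed

lemma ren_rc:
  assumes g: "ygood TT y" and H: "\<forall>t>h. yren y a (TT * (t1 + t))"
  shows "yren y a (TT * (t1 + h))"
proof (rule ccontr)
  let ?r = "yarr y (ylast y a)"
  assume "\<not> yren y a (TT * (t1 + h))"
  then have d: "TT * (t1 + h) < ?r" using ren_first[OF g] by simp
  let ?t = "h + (?r - TT * (t1 + h)) / (2 * TT)"
  have "h < ?t" using d T_pos by (simp add: field_simps)
  then have "?r \<le> TT * (t1 + ?t)" using H ren_first[OF g] by blast
  moreover have "TT * (t1 + ?t) = TT * (t1 + h) + (?r - TT * (t1 + h)) / 2"
    using T_pos by (simp add: field_simps)
  ultimately have X: "?r \<le> TT * (t1 + h) + (?r - TT * (t1 + h)) / 2" by simp
  show False using d X by (simp add: field_simps)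
qed

lemma ren_one:
  assumes g: "ygood TT y" and r: "yren y a0 a1"
  shows "yren y a1 (TT * (t1 + 1))"
proof -
  let ?k0 = "ylast y a1"
  have ina: "yarr y k \<le> a1 \<longleftrightarrow> k < ?k0" for k using count_set[OF g, of a1] by blast
  obtain k where k: "a0 < yarr y k" "yarr y k \<le> a1" using r unfolding yren_def by auto
  then have "k < ?k0" using ina by simp
  then obtain k' where k': "?k0 = Suc k'" by (cases ?k0) auto
  have "yarr y k' \<le> a1" using ina[of k'] k' by simp
  moreover have "y (Some k') \<le> TT" using g by (simp add: ygood_def)
  ultimately have "yarr y ?k0 \<le> a1 + TT" unfolding k' yarr_Suc by simp
  then show ?thesis using ren_first[OF g, of a1] by (simp add: a1_def algebra_simps)
qed

lemma Theta_S: "Gd \<omega> \<Longrightarrow> SR_Theta \<mu> Y t0 t1 \<omega> = Inf {t. 0 < t \<and> (\<forall>i. inC i \<omega> \<longrightarrow> yren (W i \<omega>) a1 (TT * (t1 + t)))}"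
proof -
  assume G: "Gd \<omega>"
  have "(\<forall>i\<in>consec_comp (\<lambda>i. SR_zeta \<mu> Y t0 (t1 - t0) i \<omega>) 0. SR_zeta \<mu> Y t1 t i \<omega> = 1)
     \<longleftrightarrow> (\<forall>i. inC i \<omega> \<longrightarrow> yren (W i \<omega>) a1 (TT * (t1 + t)))" for t
    unfolding Ball_def C_iff[OF G] zeta1[OF G] by (simp; blast)
  then show ?thesis unfolding SR_Theta_def by simp
qed

lemma Q1: "Gd \<omega> \<Longrightarrow> Qh 1 \<omega>"
  unfolding Qh_def inC_def z1_def Gd_def
proof (intro allI impI)
  fix i assume G: "\<forall>i. ygood TT (W i \<omega>)" and H: "\<forall>k. min 0 i \<le> k \<and> k \<le> max 0 i \<longrightarrow> z0 k \<omega>"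
  then have "z0 i \<omega>" by auto
  then show "yren (W i \<omega>) a1 (TT * (t1 + 1))" using ren_one G unfolding z0_def by blast
qed

lemma Theta_le:
  assumes G: "Gd \<omega>" and h: "0 \<le> h"
  shows "SR_Theta \<mu> Y t0 t1 \<omega> \<le> h \<longleftrightarrow> Qh h \<omega>"
proof -
  define S where "S = {t. 0 < t \<and> (\<forall>i. inC i \<omega> \<longrightarrow> yren (W i \<omega>) a1 (TT * (t1 + t)))}"
  have Th: "SR_Theta \<mu> Y t0 t1 \<omega> = Inf S" unfolding S_def by (rule Theta_S[OF G])
  have up: "t \<in> S \<Longrightarrow> t \<le> t' \<Longrightarrow> t' \<in> S" for t t'
    unfolding S_def using ren_mono by auto
  have qS: "Qh h' \<omega> \<Longrightarrow> 0 \<le> h' \<Longrightarrow> t > h' \<Longrightarrow> t \<in> S" for h' t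
    unfolding S_def Qh_def z1_def using ren_mono[of h' t] by auto
  have "(2::real) \<in> S" using qS[OF Q1[OF G], of 2] by simp
  then have ne: "S \<noteq> {}" by blast
  have bb: "bdd_below S" unfolding S_def by (intro bdd_belowI[of _ 0]) auto
  show ?thesis
  proof
    assume le: "SR_Theta \<mu> Y t0 t1 \<omega> \<le> h"
    have allS: "t \<in> S" if "h < t" for t
    proof -
      have "Inf S < t" using le that Th by simp
      then obtain s where "s \<in> S" "s < t" using cInf_less_iff[OF ne bb] by auto
      then show ?thesis using up by auto
    qed
    show "Qh h \<omega>" unfolding Qh_def z1_def
    proof (intro allI impI)
      fix i assume "inC i \<omega>"
      then have "\<forall>t>h. yren (W i \<omega>) a1 (TT * (t1 + t))" using allS unfolding S_def by auto
      then show "yren (W i \<omega>) a1 (TT * (t1 + h))" using G ren_rc unfolding Gd_def by blast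
    qed
  next
    assume Q: "Qh h \<omega>"
    show "SR_Theta \<mu> Y t0 t1 \<omega> \<le> h" unfolding Th
    proof (rule field_le_epsilon)
      fix e :: real assume "0 < e"
      then have "h + e \<in> S" using qS[OF Q h] by simp
      then show "Inf S \<le> h + e" using bb by (rule cInf_lower)
    qed
  qed
qed

lemma Theta_nonneg: "Gd \<omega> \<Longrightarrow> 0 \<le> SR_Theta \<mu> Y t0 t1 \<omega>"
proof -
  assume G: "Gd \<omega>"
  define S where "S = {t. 0 < t \<and> (\<forall>i. inC i \<omega> \<longrightarrow> yren (W i \<omega>) a1 (TT * (t1 + t)))}"
  have "2 \<in> S" unfolding S_def
  proof (intro CollectI conjI allI impI)
    fix i assume "inC i \<omega>"
    then have "yren (W i \<omega>) a1 (TT * (t1 + 1))" using Q1[OF G] unfolding Qh_def z1_def by blast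
    then show "yren (W i \<omega>) a1 (TT * (t1 + 2))" by (rule ren_mono[rotated]) simp
  qed simp
  then have "S \<noteq> {}" by auto
  then have "0 \<le> Inf S" by (rule cInf_greatest) (auto simp: S_def)
  then show ?thesis using Theta_S[OF G] S_def by simp
qed

lemma Theta_le1: "Gd \<omega> \<Longrightarrow> SR_Theta \<mu> Y t0 t1 \<omega> \<le> 1"
  using Theta_le[of \<omega> 1] Q1 by simp

end


lemma measurable_SR_count[measurable (raw)]:
  assumes [measurable]: "\<And>j. (\<lambda>\<omega>. V \<omega> j) \<in> borel_measurable N"
  shows "(\<lambda>\<omega>. SR_count (V \<omega>) t) \<in> measurable N (count_space UNIV)"
  unfolding SR_count_def by (rule measurable_card) measurable

context msetup begin

lemma coordSR[measurable]: "(\<lambda>y. y j) \<in> borel_measurable SR"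
  using SRr.rvV by simp

lemma SR_count_meas[measurable]: "(\<lambda>y. SR_count y t) \<in> measurable SR (count_space UNIV)"
  by (rule measurable_SR_count[where V="\<lambda>y. y"]) simp

lemma pred_count_less[measurable]: "Measurable.pred SR (\<lambda>y. SR_count y a < SR_count y b)"
proof -
  have "{y\<in>space SR. SR_count y a < SR_count y b} = (\<Union>n. {y\<in>space SR. SR_count y a = n} \<inter> {y\<in>space SR. n < SR_count y b})"
    by auto
  moreover have "(\<Union>n. {y\<in>space SR. SR_count y a = n} \<inter> {y\<in>space SR. n < SR_count y b}) \<in> sets SR"
    by measurable
  ultimately show ?thesis by (simp add: pred_def)
qed

definition "aa = measure nu {TT * u<..}"
definition R0 where "R0 = {y\<in>space SR. yren y a0 a1}"
definition R1 where "R1 h = {y\<in>space SR. yren y a1 (TT * (t1 + h))}"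

lemma R0_sets[measurable]: "R0 \<in> sets SR" unfolding R0_def by measurable
lemma R1_sets[measurable]: "R1 h \<in> sets SR" unfolding R1_def by measurable

lemma Tu_nn: "0 \<le> TT * u" using u_pos T_pos by simp

lemma prob_R0: "SRr.prob R0 = 1 - aa"
proof -
  have "R0 = {\<omega>\<in>space SR. yren \<omega> a0 (a0 + TT * u)}" unfolding R0_def a1_eq ..
  then show ?thesis using SRr.prob_ren[OF a0_nn Tu_nn] by (simp add: aa_def)
qed

lemma prob_R0c: "SRr.prob (space SR - R0) = aa"
  using prob_R0 by (simp add: SRr.prob_compl)

definition gv :: "real \<Rightarrow> real" where
  "gv h = 1 - measure nu {TT * u<..} - measure nu {TT * h<..} + measure nu {TT * u + TT * h<..}"

lemma prob_R01: "0 \<le> h \<Longrightarrow> SRr.prob (R0 \<inter> R1 h) = gv h"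
proof -
  assume h: "0 \<le> h"
  have "R0 \<inter> R1 h = {\<omega>\<in>space SR. yren \<omega> a0 (a0 + TT * u) \<and> yren \<omega> (a0 + TT * u) (a0 + TT * u + TT * h)}"
    unfolding R0_def R1_def a1_eq by (auto simp: a0_def u_def algebra_simps)
  then show ?thesis using SRr.prob_ren2[OF a0_nn Tu_nn, of "TT * h"] h T_pos by (simp add: gv_def)
qed

lemma SR_g_eq: "0 \<le> h \<Longrightarrow> SR_g \<mu> u h = gv h"
proof -
  assume h: "0 \<le> h"
  let ?A = "{y \<in> space SR. 0 < SR_count y (TT * u) \<and> SR_count y (TT * u) < SR_count y (TT * (u + h))}"
  let ?B = "{\<omega>\<in>space SR. yren \<omega> 0 (0 + TT * u) \<and> yren \<omega> (0 + TT * u) (0 + TT * u + TT * h)}"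
  have "SR_g \<mu> u h = measure SR ?A" unfolding SR_g_def ..
  also have "\<dots> = measure SR ?B"
  proof (rule measure_eq_AE)
    show "AE x in SR. (x \<in> ?A) = (x \<in> ?B)"
      using SRr.AE_good
    proof eventually_elim
      case (elim y)
      have "0 < SR_count y (TT * u) \<longleftrightarrow> SR_count y 0 < SR_count y (TT * u)"
        using SR_count_zero[OF elim] by simp
      then show ?case using SR_count_less[OF elim] by (simp add: algebra_simps)
    qed
  qed measurable
  also have "\<dots> = gv h" using SRr.prob_ren2[of 0 "TT * u" "TT * h"] Tu_nn h T_pos by (simp add: gv_def)
  finally show ?thesis .
qed

lemma aa_eq: "aa = measure nu {TT * u <..< TT}"
proof -
  interpret N: prob_space nu by (rule nu_prob)
  have "TT * u < TT" using u_lt1 T_pos by simp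
  then have "{TT * u<..} = {TT * u <..< TT} \<union> {TT..}" by auto
  moreover have "measure nu ({TT * u <..< TT} \<union> {TT..}) = measure nu {TT * u <..< TT} + measure nu {TT..}"
    by (rule N.finite_measure_Union) auto
  ultimately have "measure nu {TT * u<..} = measure nu {TT * u <..< TT} + measure nu {TT..}"
    by simp
  moreover have "measure nu {TT..} = 0" using nu_tail by (simp add: measure_def)
  ultimately show ?thesis unfolding aa_def by simp
qed

lemma aa_pos: "0 < aa"
proof -
  interpret N: prob_space nu by (rule nu_prob)
  have "0 \<le> TT * u" "TT * u < TT" using u_pos u_lt1 T_pos by auto
  then have "0 < emeasure nu {TT * u <..< TT}" by (rule nu_gap_pos)
  then show ?thesis unfolding aa_eq by (simp add: N.emeasure_eq_measure)
qed

lemma gv_bounds: "0 \<le> h \<Longrightarrow> 0 \<le> gv h \<and> gv h \<le> 1 - aa"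
proof -
  assume h: "0 \<le> h"
  have "SRr.prob (R0 \<inter> R1 h) \<le> SRr.prob R0" by (intro SRr.finite_measure_mono) auto
  then show ?thesis using prob_R01[OF h] prob_R0 measure_nonneg[of SR "R0 \<inter> R1 h"] by simp
qed

lemma z0_vimage: "{\<omega>\<in>space M. z0 i \<omega>} = W i -` R0 \<inter> space M"
  using measurable_space[OF W_meas[of i]] unfolding z0_def R0_def by (auto simp: space_SR)

lemma nz0_vimage: "{\<omega>\<in>space M. \<not> z0 i \<omega>} = W i -` (space SR - R0) \<inter> space M"
  unfolding z0_def R0_def by (auto simp: space_SR)

lemma z01_vimage: "{\<omega>\<in>space M. z0 i \<omega> \<and> z1 h i \<omega>} = W i -` (R0 \<inter> R1 h) \<inter> space M"
  unfolding z0_def z1_def R0_def R1_def by (auto simp: space_SR)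

lemma prob_nz0: "prob {\<omega>\<in>space M. \<not> z0 i \<omega>} = aa"
  unfolding nz0_vimage by (subst prob_W) (auto simp: prob_R0c)

lemma prob_z0: "prob {\<omega>\<in>space M. z0 i \<omega>} = 1 - aa"
  unfolding z0_vimage by (subst prob_W) (auto simp: prob_R0)

lemma prob_z01: "0 \<le> h \<Longrightarrow> prob {\<omega>\<in>space M. z0 i \<omega> \<and> z1 h i \<omega>} = gv h"
  unfolding z01_vimage by (subst prob_W) (auto simp: prob_R01)

end


context msetup begin

lemma aa_le1: "aa \<le> 1"
proof -
  have "prob {\<omega>\<in>space M. \<not> z0 0 \<omega>} \<le> 1" by (rule prob_le_1)
  then show ?thesis using prob_nz0[of 0] by simp
qed

lemma prob_all_z0:
  assumes f: "inj f"
  shows "prob {\<omega>\<in>space M. \<forall>k::nat. z0 (f k) \<omega>} = 0"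
proof -
  let ?E = "{\<omega>\<in>space M. \<forall>k::nat. z0 (f k) \<omega>}"
  let ?q = "1 - aa"
  have le: "prob ?E \<le> ?q ^ n" for n
  proof (cases "n = 0")
    case True then show ?thesis by simp
  next
    case False
    let ?J = "f ` {..<n}"
    have "?E \<subseteq> (\<Inter>j\<in>?J. W j -` R0 \<inter> space M)" using z0_vimage by blast
    then have "prob ?E \<le> prob (\<Inter>j\<in>?J. W j -` R0 \<inter> space M)"
      using False by (intro finite_measure_mono) (auto intro!: sets.finite_INT simp: sets_SR[symmetric])
    also have "\<dots> = (\<Prod>j\<in>?J. prob (W j -` R0 \<inter> space M))"
      using False by (intro indep_varsD[OF indep_W]) (auto simp: sets_SR[symmetric])
    also have "\<dots> = (\<Prod>j\<in>?J. ?q)"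
      by (intro prod.cong refl) (simp add: z0_vimage[symmetric] prob_z0)
    also have "\<dots> = ?q ^ n" using f by (simp add: card_image inj_on_subset)
    finally show ?thesis .
  qed
  have "(\<lambda>n. ?q ^ n) \<longlonglongrightarrow> 0" using aa_pos aa_le1 by (intro LIMSEQ_power_zero) simp
  then have "prob ?E \<le> 0" using le by (intro LIMSEQ_le_const) auto
  then show ?thesis using measure_nonneg[of M ?E] by linarith
qed

definition E :: "real \<Rightarrow> nat \<Rightarrow> nat \<Rightarrow> 'a set" where
  "E h l r = {\<omega>\<in>space M. \<not> z0 (- int l - 1) \<omega> \<and> \<not> z0 (int r + 1) \<omega>
      \<and> (\<forall>i. - int l \<le> i \<and> i \<le> int r \<longrightarrow> z0 i \<omega> \<and> z1 h i \<omega>)}"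

lemma E_sets[measurable]: "E h l r \<in> sets M"
proof -
  have "E h l r = {\<omega>\<in>space M. \<not> z0 (- int l - 1) \<omega> \<and> \<not> z0 (int r + 1) \<omega>
      \<and> (\<forall>i\<in>{- int l .. int r}. z0 i \<omega> \<and> z1 h i \<omega>)}"
    unfolding E_def by auto
  also have "\<dots> \<in> sets M" by measurable
  finally show ?thesis .
qed

lemma memR0: "\<omega> \<in> space M \<Longrightarrow> W i \<omega> \<in> R0 \<longleftrightarrow> z0 i \<omega>"
  unfolding R0_def z0_def by (simp add: space_SR)
lemma memR1: "W i \<omega> \<in> R1 h \<longleftrightarrow> z1 h i \<omega>"
  unfolding R1_def z1_def by (simp add: space_SR)
lemma memSR: "W i \<omega> \<in> space SR" by (simp add: space_SR)

lemma prob_E: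
  assumes h: "0 \<le> h"
  shows "prob (E h l r) = aa^2 * gv h ^ (l + r + 1)"
proof -
  define b1 where "b1 = - int l - 1"
  define b2 where "b2 = int r + 1"
  define K where "K = {- int l .. int r}"
  have b: "b1 \<notin> insert b2 K" "b2 \<notin> K" "finite K" unfolding b1_def b2_def K_def by auto
  define J where "J = insert b1 (insert b2 K)"
  define A where "A i = (if i = b1 \<or> i = b2 then space SR - R0 else R0 \<inter> R1 h)" for i
  have As0: "A i \<in> sets SR" for i unfolding A_def by simp
  have As: "A i \<in> sets PB" for i using As0[of i] by (simp only: sets_SR)
  have AK: "i \<in> K \<Longrightarrow> A i = R0 \<inter> R1 h" for i using b unfolding A_def by auto
  have Ab: "A b1 = space SR - R0" "A b2 = space SR - R0" unfolding A_def by auto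
  have "E h l r = (\<Inter>i\<in>J. W i -` A i \<inter> space M)"
  proof (intro set_eqI)
    fix \<omega>
    have "\<omega> \<in> (\<Inter>i\<in>J. W i -` A i \<inter> space M) \<longleftrightarrow> \<omega> \<in> space M \<and> W b1 \<omega> \<in> A b1 \<and> W b2 \<omega> \<in> A b2 \<and> (\<forall>i\<in>K. W i \<omega> \<in> A i)"
      unfolding J_def by blast
    also have "\<dots> \<longleftrightarrow> \<omega> \<in> space M \<and> \<not> z0 b1 \<omega> \<and> \<not> z0 b2 \<omega> \<and> (\<forall>i\<in>K. z0 i \<omega> \<and> z1 h i \<omega>)"
    proof (cases "\<omega> \<in> space M")
      case True
      have "(\<forall>i\<in>K. W i \<omega> \<in> A i) \<longleftrightarrow> (\<forall>i\<in>K. z0 i \<omega> \<and> z1 h i \<omega>)"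
        using AK memR0[OF True] memR1 by simp
      moreover have "W b1 \<omega> \<in> A b1 \<longleftrightarrow> \<not> z0 b1 \<omega>" using Ab memR0[OF True] memSR by simp
      moreover have "W b2 \<omega> \<in> A b2 \<longleftrightarrow> \<not> z0 b2 \<omega>" using Ab memR0[OF True] memSR by simp
      ultimately show ?thesis using True by simp
    qed simp
    also have "\<dots> \<longleftrightarrow> \<omega> \<in> E h l r" unfolding E_def b1_def b2_def K_def Ball_def by simp
    finally show "\<omega> \<in> E h l r \<longleftrightarrow> \<omega> \<in> (\<Inter>i\<in>J. W i -` A i \<inter> space M)" by simp
  qed
  then have "prob (E h l r) = prob (\<Inter>i\<in>J. W i -` A i \<inter> space M)" by simp
  also have "\<dots> = (\<Prod>i\<in>J. prob (W i -` A i \<inter> space M))"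
    using As b unfolding J_def by (intro indep_varsD[OF indep_W]) auto
  also have "\<dots> = prob (W b1 -` A b1 \<inter> space M) * (prob (W b2 -` A b2 \<inter> space M) * (\<Prod>i\<in>K. prob (W i -` A i \<inter> space M)))"
    unfolding J_def using b by (simp add: prod.insert)
  also have "(\<Prod>i\<in>K. prob (W i -` A i \<inter> space M)) = (\<Prod>i\<in>K. gv h)"
  proof (intro prod.cong refl)
    fix i assume "i \<in> K"
    then show "prob (W i -` A i \<inter> space M) = gv h"
      using prob_W[of "R0 \<inter> R1 h" i] prob_R01[OF h] AK by simp
  qed
  also have "prob (W b1 -` A b1 \<inter> space M) = aa" by (simp add: Ab prob_W prob_R0c)
  also have "prob (W b2 -` A b2 \<inter> space M) = aa" by (simp add: Ab prob_W prob_R0c)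
  also have "(\<Prod>i\<in>K. gv h) = gv h ^ (l + r + 1)"
  proof -
    have "card K = l + r + 1" unfolding K_def by simp
    then show ?thesis by simp
  qed
  finally show ?thesis by (simp add: power2_eq_square)
qed

lemma interval_z0:
  assumes "z0 0 \<omega>" "\<forall>n<r. z0 (int n + 1) \<omega>" "\<forall>n<l. z0 (- int n - 1) \<omega>"
    and "- int l \<le> i" "i \<le> int r"
  shows "z0 i \<omega>"
proof -
  consider "i = 0" | "0 < i" | "i < 0" by linarith
  then show ?thesis
  proof cases
    case 1 then show ?thesis using assms by simp
  next
    case 2
    then have "i = int (nat i - 1) + 1" "nat i - 1 < r" using assms by auto
    then show ?thesis using assms(2) by metis
  next
    case 3
    then have "i = - int (nat (- i) - 1) - 1" "nat (- i) - 1 < l" using assms by auto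
    then show ?thesis using assms(3) by metis
  qed
qed

lemma E_sub_Q: "E h l r \<subseteq> {\<omega>\<in>space M. Qh h \<omega>}"
proof safe
  fix \<omega> assume e: "\<omega> \<in> E h l r"
  then show "\<omega> \<in> space M" by (simp add: E_def)
  show "Qh h \<omega>" unfolding Qh_def
  proof (intro allI impI)
    fix i assume c: "inC i \<omega>"
    have "i \<le> int r"
    proof (rule ccontr)
      assume "\<not> i \<le> int r"
      then have "z0 (int r + 1) \<omega>" using c unfolding inC_def by auto
      then show False using e by (simp add: E_def)
    qed
    moreover have "- int l \<le> i"
    proof (rule ccontr)
      assume "\<not> - int l \<le> i"
      then have "z0 (- int l - 1) \<omega>" using c unfolding inC_def by auto
      then show False using e by (simp add: E_def)
    qed
    ultimately show "z1 h i \<omega>" using e by (simp add: E_def)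
  qed
qed

lemma N0_sub_Q: "{\<omega>\<in>space M. \<not> z0 0 \<omega>} \<subseteq> {\<omega>\<in>space M. Qh h \<omega>}"
  unfolding Qh_def inC_def by force

lemma Q_sub: "{\<omega>\<in>space M. Qh h \<omega>} \<subseteq> {\<omega>\<in>space M. \<not> z0 0 \<omega>} \<union> (\<Union>l. \<Union>r. E h l r)
   \<union> {\<omega>\<in>space M. \<forall>k::nat. z0 (int k) \<omega>} \<union> {\<omega>\<in>space M. \<forall>k::nat. z0 (- int k) \<omega>}"
proof
  fix \<omega> assume w: "\<omega> \<in> {\<omega>\<in>space M. Qh h \<omega>}"
  then have sp: "\<omega> \<in> space M" and Q: "Qh h \<omega>" by auto
  show "\<omega> \<in> {\<omega>\<in>space M. \<not> z0 0 \<omega>} \<union> (\<Union>l. \<Union>r. E h l r)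
   \<union> {\<omega>\<in>space M. \<forall>k::nat. z0 (int k) \<omega>} \<union> {\<omega>\<in>space M. \<forall>k::nat. z0 (- int k) \<omega>}"
  proof (cases "z0 0 \<omega> \<and> \<not> (\<forall>k::nat. z0 (int k) \<omega>) \<and> \<not> (\<forall>k::nat. z0 (- int k) \<omega>)")
    case False then show ?thesis using sp by blast
  next
    case True
    then have z: "z0 0 \<omega>" and n2: "\<not> (\<forall>k::nat. z0 (int k) \<omega>)" and n3: "\<not> (\<forall>k::nat. z0 (- int k) \<omega>)"
      by auto
  obtain k2 :: nat where k2: "\<not> z0 (- int k2) \<omega>" using n3 by auto
  obtain k1 :: nat where k1: "\<not> z0 (int k1) \<omega>" using n2 by auto
  have "k1 \<noteq> 0"
  proof
    assume "k1 = 0" then show False using k1 z by simp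
  qed
  moreover have "k2 \<noteq> 0"
  proof
    assume "k2 = 0" then show False using k2 z by simp
  qed
  ultimately obtain n1 n2 where n12: "k1 = Suc n1" "k2 = Suc n2" by (metis not0_implies_Suc)
  have ex1: "\<exists>n. \<not> z0 (int n + 1) \<omega>" using k1 n12 by (intro exI[of _ n1]) (simp add: add.commute)
  have e2: "- int n2 - 1 = - int k2" using n12 by simp
  have ex2: "\<exists>n. \<not> z0 (- int n - 1) \<omega>"
    by (rule exI[of _ n2]) (subst e2, rule k2)
  define r where "r = (LEAST n. \<not> z0 (int n + 1) \<omega>)"
  define l where "l = (LEAST n. \<not> z0 (- int n - 1) \<omega>)"
  have r1: "\<not> z0 (int r + 1) \<omega>" unfolding r_def using ex1 by (rule LeastI_ex)
  have l1: "\<not> z0 (- int l - 1) \<omega>" unfolding l_def using ex2 by (rule LeastI_ex)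
  have r2: "\<forall>n<r. z0 (int n + 1) \<omega>"
  proof (intro allI impI)
    fix n assume "n < r"
    then have "\<not> \<not> z0 (int n + 1) \<omega>" unfolding r_def by (rule not_less_Least)
    then show "z0 (int n + 1) \<omega>" by simp
  qed
  have l2: "\<forall>n<l. z0 (- int n - 1) \<omega>"
  proof (intro allI impI)
    fix n assume "n < l"
    then have "\<not> \<not> z0 (- int n - 1) \<omega>" unfolding l_def by (rule not_less_Least)
    then show "z0 (- int n - 1) \<omega>" by simp
  qed
  have "\<omega> \<in> E h l r"
    unfolding E_def
  proof (intro CollectI conjI sp r1 l1 allI impI)
    fix i assume i: "- int l \<le> i \<and> i \<le> int r"
    then show "z0 i \<omega>" using interval_z0[OF z r2 l2] by auto
    have "inC i \<omega>" unfolding inC_def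
    proof (intro allI impI)
      fix k assume "min 0 i \<le> k \<and> k \<le> max 0 i"
      then have "- int l \<le> k" "k \<le> int r" using i by auto
      then show "z0 k \<omega>" using interval_z0[OF z r2 l2] by auto
    qed
    then show "z1 h i \<omega>" using Q unfolding Qh_def by auto
  qed
  then show ?thesis by blast
  qed
qed

lemma E_disj_N0: "{\<omega>\<in>space M. \<not> z0 0 \<omega>} \<inter> E h l r = {}"
  unfolding E_def by force

lemma E_disj_r: "r < r' \<Longrightarrow> E h l r \<inter> E h l' r' = {}"
  unfolding E_def by fastforce

lemma E_disj_l: "l < l' \<Longrightarrow> E h l r \<inter> E h l' r' = {}"
  unfolding E_def by fastforce

lemma E_disj: "(l, r) \<noteq> (l', r') \<Longrightarrow> E h l r \<inter> E h l' r' = {}"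
proof -
  assume ne: "(l, r) \<noteq> (l', r')"
  then consider "r < r'" | "r' < r" | "l < l'" | "l' < l" by (metis linorder_neqE_nat)
  then show ?thesis
  proof cases
    case 1 then show ?thesis by (rule E_disj_r)
  next
    case 2 then have "E h l' r' \<inter> E h l r = {}" by (rule E_disj_r)
    then show ?thesis by (simp add: Int_commute)
  next
    case 3 then show ?thesis by (rule E_disj_l)
  next
    case 4 then have "E h l' r' \<inter> E h l r = {}" by (rule E_disj_l)
    then show ?thesis by (simp add: Int_commute)
  qed
qed

end


context msetup begin

lemma gv_lt1: "0 \<le> h \<Longrightarrow> gv h < 1" using gv_bounds aa_pos by fastforce
lemma gv_nn: "0 \<le> h \<Longrightarrow> 0 \<le> gv h" using gv_bounds by blast

lemma prob_Q:
  assumes h: "0 \<le> h"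
  shows "prob {\<omega>\<in>space M. Qh h \<omega>} = aa + aa^2 * gv h / (1 - gv h)^2"
proof -
  let ?g = "gv h"
  let ?N0 = "{\<omega>\<in>space M. \<not> z0 0 \<omega>}"
  define F where "F l = (\<Union>r. E h l r)" for l
  let ?U = "\<Union>l. F l"
  let ?I1 = "{\<omega>\<in>space M. \<forall>k::nat. z0 (int k) \<omega>}"
  let ?I2 = "{\<omega>\<in>space M. \<forall>k::nat. z0 (- int k) \<omega>}"
  have g0: "0 \<le> ?g" and g1: "?g < 1" using gv_nn[OF h] gv_lt1[OF h] by auto
  have I1: "?I1 \<in> null_sets M"
    using prob_all_z0[of int] by (auto simp: null_sets_def emeasure_eq_measure inj_on_def)
  have I2: "?I2 \<in> null_sets M"
    using prob_all_z0[of "\<lambda>k. - int k"] by (auto simp: null_sets_def emeasure_eq_measure inj_on_def)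
  have FE: "F l \<in> events" for l unfolding F_def by measurable
  have "prob {\<omega>\<in>space M. Qh h \<omega>} = prob (?N0 \<union> ?U)"
  proof (rule measure_eq_AE)
    have "AE \<omega> in M. \<omega> \<notin> ?I1 \<union> ?I2" using I1 I2 by (intro AE_not_in) auto
    then show "AE \<omega> in M. (\<omega> \<in> {\<omega>\<in>space M. Qh h \<omega>}) = (\<omega> \<in> ?N0 \<union> ?U)"
    proof eventually_elim
      case (elim \<omega>)
      have "?N0 \<union> ?U \<subseteq> {\<omega>\<in>space M. Qh h \<omega>}"
        using N0_sub_Q[of h] E_sub_Q[of h] unfolding F_def by blast
      moreover have "{\<omega>\<in>space M. Qh h \<omega>} \<subseteq> ?N0 \<union> ?U \<union> ?I1 \<union> ?I2"
        using Q_sub[of h] unfolding F_def by blast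
      ultimately show ?case using elim by blast
    qed
  qed (use FE in auto)
  also have "\<dots> = prob ?N0 + prob ?U"
  proof (rule finite_measure_Union)
    show "?N0 \<inter> ?U = {}" using E_disj_N0[of h] unfolding F_def by blast
  qed (use FE in auto)
  also have "prob ?N0 = aa" by (rule prob_nz0)
  also have "prob ?U = aa^2 * ?g / (1 - ?g)^2"
  proof -
    have Fl: "(\<lambda>r. prob (E h l r)) sums prob (F l)" for l
      unfolding F_def
    proof (rule measure_UNION)
      show "disjoint_family (E h l)"
        unfolding disjoint_family_on_def using E_disj[of l _ l _ h] by auto
    qed (auto simp: emeasure_eq_measure)
    have geo: "(\<lambda>r. aa^2 * ?g^(l+1) * ?g^r) sums (aa^2 * ?g^(l+1) * (1 / (1 - ?g)))" for l
      using g0 g1 by (intro sums_mult geometric_sums) simp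
    have PF: "prob (F l) = aa^2 * ?g^(l+1) / (1 - ?g)" for l
    proof -
      have "(\<lambda>r. prob (E h l r)) = (\<lambda>r. aa^2 * ?g^(l+1) * ?g^r)"
        by (simp add: prob_E[OF h] power_add mult_ac fun_eq_iff)
      then have "(\<lambda>r. prob (E h l r)) sums (aa^2 * ?g^(l+1) * (1 / (1 - ?g)))" using geo by simp
      then show ?thesis using Fl[of l] sums_unique2 by fastforce
    qed
    have U: "(\<lambda>l. prob (F l)) sums prob ?U"
    proof (rule measure_UNION)
      show "disjoint_family F"
        unfolding disjoint_family_on_def F_def using E_disj[of _ _ _ _ h] by fastforce
    qed (use FE in \<open>auto simp: emeasure_eq_measure\<close>)
    have "(\<lambda>l. aa^2 * ?g / (1 - ?g) * ?g^l) sums (aa^2 * ?g / (1 - ?g) * (1 / (1 - ?g)))"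
      using g0 g1 by (intro sums_mult geometric_sums) simp
    moreover have "(\<lambda>l. aa^2 * ?g / (1 - ?g) * ?g^l) = (\<lambda>l. prob (F l))"
      by (simp add: PF fun_eq_iff)
    ultimately have "(\<lambda>l. prob (F l)) sums (aa^2 * ?g / (1 - ?g) * (1 / (1 - ?g)))" by simp
    then have "prob ?U = aa^2 * ?g / (1 - ?g) * (1 / (1 - ?g))" using U sums_unique2 by blast
    then show ?thesis by (simp add: power2_eq_square)
  qed
  finally show ?thesis .
qed

definition Th' :: "'a \<Rightarrow> real" where "Th' \<omega> = (if Gd \<omega> then SR_Theta \<mu> Y t0 t1 \<omega> else 0)"

lemma Th'_range: "Th' \<omega> \<in> {0..1}"
  unfolding Th'_def using Theta_nonneg Theta_le1 by auto

lemma Th'_le: "0 \<le> h \<Longrightarrow> Th' \<omega> \<le> h \<longleftrightarrow> (\<not> Gd \<omega> \<or> Qh h \<omega>)"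
  unfolding Th'_def using Theta_le by auto

lemma Th'_meas: "Th' \<in> borel_measurable M"
proof (rule borel_measurable_iff_le[THEN iffD2], intro allI)
  fix a :: real
  show "{w \<in> space M. Th' w \<le> a} \<in> sets M"
  proof (cases "0 \<le> a")
    case True
    then have "{w \<in> space M. Th' w \<le> a} = {w \<in> space M. \<not> Gd w \<or> Qh a w}" using Th'_le by auto
    then show ?thesis by simp
  next
    case False
    have "0 \<le> Th' w" for w using Th'_range[of w] by simp
    then have eq: "{w \<in> space M. Th' w \<le> a} = {}" using False by (auto simp: not_le intro: less_le_trans[of a 0])
    show ?thesis unfolding eq by simp
  qed
qed

lemma main_result:
  "\<exists>\<Theta>'. \<Theta>' \<in> borel_measurable M
            \<and> (AE \<omega> in M. SR_Theta \<mu> Y t0 t1 \<omega> = \<Theta>' \<omega>)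
            \<and> (AE \<omega> in M. \<Theta>' \<omega> \<in> {0..1})
            \<and> (\<forall>h\<in>{0..1}. measure M {\<omega> \<in> space M. \<Theta>' \<omega> \<le> h} = theta_cdf \<mu> (t1 - t0) h)"
proof (intro exI conjI ballI)
  show "Th' \<in> borel_measurable M" by (rule Th'_meas)
  show "AE \<omega> in M. SR_Theta \<mu> Y t0 t1 \<omega> = Th' \<omega>" using AE_Gd by eventually_elim (simp add: Th'_def)
  show "AE \<omega> in M. Th' \<omega> \<in> {0..1}" using Th'_range by simp
  fix h :: real assume "h \<in> {0..1}"
  then have h: "0 \<le> h" by simp
  have "measure M {\<omega> \<in> space M. Th' \<omega> \<le> h} = prob {\<omega>\<in>space M. Qh h \<omega>}"
  proof (rule measure_eq_AE)
    show "AE \<omega> in M. (\<omega> \<in> {\<omega> \<in> space M. Th' \<omega> \<le> h}) = (\<omega> \<in> {\<omega>\<in>space M. Qh h \<omega>})"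
      using AE_Gd by eventually_elim (use Th'_le[OF h] in auto)
    show "{\<omega> \<in> space M. Th' \<omega> \<le> h} \<in> sets M" using Th'_meas by measurable
  qed simp
  also have "\<dots> = aa + aa^2 * gv h / (1 - gv h)^2" by (rule prob_Q[OF h])
  also have "\<dots> = theta_cdf \<mu> (t1 - t0) h"
    unfolding theta_cdf_def Let_def u_def[symmetric] aa_eq[symmetric] SR_g_eq[OF h]
    by (simp add: power_divide)
  finally show "measure M {\<omega> \<in> space M. Th' \<omega> \<le> h} = theta_cdf \<mu> (t1 - t0) h" .
qed

end

theorem mainTheorem7:
  fixes \<mu> :: "real measure" and M :: "'a measure"
    and Y :: "int \<Rightarrow> nat option \<Rightarrow> 'a \<Rightarrow> real" and t0 t1 :: real
  assumes mu_prob: "prob_space \<mu>" and mu_sets: "sets \<mu> = sets borel"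
    and mu_pos: "emeasure \<mu> {..0} = 0"
    and mu_bdd: "\<exists>B. emeasure \<mu> {B<..} = 0"
    and M_prob: "prob_space M"
    and indep: "prob_space.indep_vars M (\<lambda>_. borel) (\<lambda>(i, j). Y i j) UNIV"
    and law_first: "\<And>i. distr M borel (Y i None) = SR_nu \<mu>"
    and law_inter: "\<And>i k. distr M borel (Y i (Some k)) = \<mu>"
    and t0: "0 \<le> t0" and t01: "t0 < t1" and t10: "t1 < t0 + 1"
  shows "\<exists>\<Theta>'. \<Theta>' \<in> borel_measurable M
            \<and> (AE \<omega> in M. SR_Theta \<mu> Y t0 t1 \<omega> = \<Theta>' \<omega>)
            \<and> (AE \<omega> in M. \<Theta>' \<omega> \<in> {0..1})
            \<and> (\<forall>h\<in>{0..1}. measure M {\<omega> \<in> space M. \<Theta>' \<omega> \<le> h} = theta_cdf \<mu> (t1 - t0) h)"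
proof -
  have ma: "mu_ass \<mu>" by (rule mu_ass.intro) (use mu_prob mu_sets mu_pos mu_bdd in auto)
  have mx: "msetup_axioms \<mu> M Y t0 t1"
    by (rule msetup_axioms.intro) (use indep law_first law_inter t0 t01 t10 in auto)
  interpret msetup \<mu> M Y t0 t1 by (rule msetup.intro[OF ma M_prob mx])
  show ?thesis by (rule main_result)
qed


end
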